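(* Let $f\in\mathscr H$, let $s\in\mathbb C$ with $-s\in\operatorname{Reg}(f)$, let $\mathbf h\in\mathbb R^N_{>0}$ and $\mathbf i\in\mathbb Z^N_{\ge0}$, and put $|\mathbf i|=i_1+\cdots+i_N$. Then $-s-|\mathbf i|\in\operatorname{Reg}(f)$ and for every $t>0$ $$(-\Delta_{\mathbf h})^{\mathbf i}f(-s,t)=s(s+1)\cdots(s+|\mathbf i|-1)\int_{[0,h_1]^{i_1}\times\cdots\times[0,h_N]^{i_N}}f\big(-s-|\mathbf i|,\,t+u_1+\cdots+u_{|\mathbf i|}\big)\,du_1\cdots du_{|\mathbf i|},$$ where $\Delta_{\mathbf h}^{\mathbf i}$ acts in the variable $t$. In particular, for every $n\in\mathbb Z_{\ge0}\cap\operatorname{Reg}(f)$, the function $t\mapsto f(n,t)$ is a polynomial in $t$ of degree at most $n$.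
   Context: For functions $g$ on $(0,\infty)$ and $h>0$: $\Delta_hg(t)=g(t+h)-g(t)$; for $\mathbf h\in\mathbb R^N_{>0}$, $\mathbf i\in\mathbb Z^N_{\ge0}$, $\Delta_{\mathbf h}^{\mathbf i}=\Delta_{h_1}^{i_1}\cdots\Delta_{h_N}^{i_N}$. $\mathscr D(\mathscr L)$: measurable $\varphi:(0,\infty)\to\mathbb C$ integrable on every $(0,R)$ with $\int_0^\infty e^{-su}|\varphi(u)|du<\infty$ for all $\operatorname{Re}(s)>0$; $\mathscr L(\varphi)(t)=\int_0^\infty e^{-tu}\varphi(u)du$. $\mathscr D^\iota(\mathscr L)$: those $\varphi\in\mathscr D(\mathscr L)$ with $|\varphi|\le\psi$ for some non-decreasing (non-negative) $\psi\in\mathscr D(\mathscr L)$. For a function $f(s,t)$ on $(\mathbb C\setminus S)\times(0,\infty)$, with $S$ a closed discrete set and $s\mapsto f(s,t)$ holomorphic on $\mathbb C\setminus S$ for each $t$, let $\operatorname{Reg}(f)$ be the set of $s\in\mathbb C$ at which $s\mapsto f(s,t)$ is holomorphic (after removing removable singularities) for every $t>0$. The space $\mathscr H$ consists of such $f$ satisfying: (a) $\mathbb C\setminus\operatorname{Reg}(f)$ is discrete; (b) for $s\in\operatorname{Reg}(f)$, $t\mapsto f(s,t)$ is differentiable on $(0,\infty)$; (c) $\operatorname{Reg}(f)\subseteq\operatorname{Reg}(\partial f)$, where $\partial f(s,t)=\frac{\partial}{\partial t}f(s,t)$; (d) $f(-1,t)=\mathscr L(\varphi)(t)$ for some $\varphi\in\mathscr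 D^\iota(\mathscr L)$; (e) $f(-s,t)=\mathscr L\big(\varphi(u)u^{s-1}/\Gamma(s)\big)(t)$ for all $s$ with $\operatorname{Re}(s)\ge1$ and all $t>0$. *)

theory Defs
  imports "HOL-Analysis.Analysis" "HOL-Computational_Algebra.Polynomial"
begin

definition discrete_set :: "complex set \<Rightarrow> bool" where
  "discrete_set S \<longleftrightarrow> (\<forall>z\<in>S. \<exists>e>0. \<forall>w\<in>S. dist w z < e \<longrightarrow> w = z)"

text \<open>Reg(f): points s such that, for every t > 0, z \<mapsto> f z t is holomorphic at s
  after removing a removable singularity (only values on a punctured neighbourhood matter).\<close>
definition Reg :: "(complex \<Rightarrow> real \<Rightarrow> complex) \<Rightarrow> complex set" where
  "Reg f = {s. \<forall>t>0. \<exists>e>0. \<exists>g. g holomorphic_on ball s e \<and>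
                 (\<forall>z\<in>ball s e - {s}. f z t = g z)}"

definition fR :: "(complex \<Rightarrow> real \<Rightarrow> complex) \<Rightarrow> complex \<Rightarrow> real \<Rightarrow> complex" where
  "fR f s t = Lim (at s) (\<lambda>z. f z t)"

definition pdt :: "(complex \<Rightarrow> real \<Rightarrow> complex) \<Rightarrow> complex \<Rightarrow> real \<Rightarrow> complex" where
  "pdt f z t = vector_derivative (\<lambda>\<tau>. f z \<tau>) (at t)"

definition Laplace :: "(real \<Rightarrow> complex) \<Rightarrow> real \<Rightarrow> complex" where
  "Laplace \<phi> t = (LINT u:{0<..}|lborel. complex_of_real (exp (- t * u)) * \<phi> u)"

definition DL :: "(real \<Rightarrow> complex) \<Rightarrow> bool" where
  "DL \<phi> \<longleftrightarrow> set_borel_measurable lborel {0<..} \<phi>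
     \<and> (\<forall>R>0. set_integrable lborel {0<..<R} \<phi>)
     \<and> (\<forall>s::complex. Re s > 0 \<longrightarrow>
          set_integrable lborel {0<..} (\<lambda>u. exp (- s * complex_of_real u) * complex_of_real (norm (\<phi> u))))"

definition DLi :: "(real \<Rightarrow> complex) \<Rightarrow> bool" where
  "DLi \<phi> \<longleftrightarrow> DL \<phi> \<and> (\<exists>\<psi>::real \<Rightarrow> real. mono_on {0<..} \<psi> \<and> (\<forall>u>0. 0 \<le> \<psi> u)
       \<and> DL (\<lambda>u. complex_of_real (\<psi> u)) \<and> (\<forall>u>0. norm (\<phi> u) \<le> \<psi> u))"

text \<open>Membership in the space H, with S the closed discrete exceptional set
  (f is only meaningful on (C - S) x (0,oo)).\<close>
definition inH :: "complex set \<Rightarrow> (complex \<Rightarrow> real \<Rightarrow> complex) \<Rightarrow> bool" where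
  "inH S f \<longleftrightarrow> closed S \<and> discrete_set S
     \<and> (\<forall>t>0. (\<lambda>z. f z t) holomorphic_on (- S))
     \<and> discrete_set (- Reg f)
     \<and> (\<forall>s\<in>Reg f. \<forall>t>0. (\<lambda>\<tau>. fR f s \<tau>) differentiable (at t))
     \<and> Reg f \<subseteq> Reg (pdt f)
     \<and> (\<exists>\<phi>. DLi \<phi> \<and> - 1 \<notin> S \<and> (\<forall>t>0. f (- 1) t = Laplace \<phi> t)
          \<and> (\<forall>s. Re s \<ge> 1 \<longrightarrow> - s \<notin> S \<and> (\<forall>t>0. f (- s) t =
                 Laplace (\<lambda>u. \<phi> u * (complex_of_real u) powr (s - 1) / Gamma s) t)))"

definition negdiff :: "real \<Rightarrow> (real \<Rightarrow> complex) \<Rightarrow> real \<Rightarrow> complex" where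
  "negdiff h g t = - (g (t + h) - g t)"

text \<open>(-Delta_h)^i for multi-indices given as lists hs = [h_1..h_N], is = [i_1..i_N].\<close>
fun negdiff_multi :: "real list \<Rightarrow> nat list \<Rightarrow> (real \<Rightarrow> complex) \<Rightarrow> real \<Rightarrow> complex" where
  "negdiff_multi (h # hs) (i # ks) g = (negdiff h ^^ i) (negdiff_multi hs ks g)"
| "negdiff_multi _ _ g = g"

text \<open>Side lengths of the box [0,h_1]^{i_1} x ... x [0,h_N]^{i_N}, one per coordinate.\<close>
definition box_sides :: "real list \<Rightarrow> nat list \<Rightarrow> real list" where
  "box_sides hs ks = concat (map (\<lambda>(h, i). replicate i h) (zip hs ks))"

end

theory Submission
  imports Defs "HOL-Complex_Analysis.Complex_Analysis" "HOL-Real_Asymp.Real_Asymp"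
begin

locale Hs =
  fixes S :: "complex set" and f :: "complex \<Rightarrow> real \<Rightarrow> complex" and \<phi> :: "real \<Rightarrow> complex"
  assumes closedS: "closed S" and discS: "discrete_set S"
    and holf: "\<And>t. t > 0 \<Longrightarrow> (\<lambda>z. f z t) holomorphic_on (- S)"
    and RegP: "Reg f \<subseteq> Reg (pdt f)"
    and DLphi: "DL \<phi>"
    and notS: "\<And>s. Re s \<ge> 1 \<Longrightarrow> - s \<notin> S"
    and lap: "\<And>s t. Re s \<ge> 1 \<Longrightarrow> t > 0 \<Longrightarrow>
        f (- s) t = Laplace (\<lambda>u. \<phi> u * of_real u powr (s - 1) / Gamma s) t"
begin

lemma noS_left: "Re z \<le> -1 \<Longrightarrow> z \<notin> S"
  using notS[of "-z"] by simp

lemma S_nolimpt: "\<not> z islimpt S"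
proof
  assume l: "z islimpt S"
  then have "z \<in> S" using closedS closed_limpt by blast
  then obtain e where e: "e > 0" "\<forall>w\<in>S. dist w z < e \<longrightarrow> w = z"
    using discS unfolding discrete_set_def by blast
  then show False using l unfolding islimpt_approachable by blast
qed

definition SN :: "complex set" where "SN = {w + of_nat n |w n. w \<in> S}"
definition Om :: "complex set" where "Om = - SN"

lemma S_finite_cball: "finite (S \<inter> cball c r)"
  using finite_not_islimpt_in_compact[of "cball c r" S] S_nolimpt by (simp add: Int_commute)

lemma SN_finite_cball: "finite (SN \<inter> cball c r)"
proof -
  define N where "N = nat \<lceil>Re c + r + 2\<rceil>"
  have "SN \<inter> cball c r \<subseteq> (\<Union>n\<le>N. (\<lambda>w. w + of_nat n) ` (S \<inter> cball (c - of_nat n) r))"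
  proof
    fix x assume x: "x \<in> SN \<inter> cball c r"
    then obtain w n where w: "w \<in> S" "x = w + of_nat n" unfolding SN_def by blast
    have "Re w > -1" using noS_left[of w] w by force
    have "\<bar>Re x - Re c\<bar> \<le> r" using x abs_Re_le_cmod[of "x - c"] by (auto simp: dist_norm norm_minus_commute)
    have "Re x = Re w + real n" using w by simp
    then have "real n < Re c + r + 1" using \<open>Re w > -1\<close> \<open>\<bar>Re x - Re c\<bar> \<le> r\<close> by linarith
    then have "n \<le> N" unfolding N_def by linarith
    moreover have "w \<in> cball (c - of_nat n) r" using x w by (auto simp: dist_norm algebra_simps)
    ultimately show "x \<in> (\<Union>n\<le>N. (\<lambda>w. w + of_nat n) ` (S \<inter> cball (c - of_nat n) r))"
      using w by blast
  qed
  moreover have "finite (\<Union>n\<le>N. (\<lambda>w. w + of_nat n) ` (S \<inter> cball (c - of_nat n) r))"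
    using S_finite_cball by auto
  ultimately show ?thesis using finite_subset by blast
qed

lemma SN_nolimpt: "\<not> z islimpt SN"
proof
  assume "z islimpt SN"
  then have "infinite (SN \<inter> ball z 1)" using islimpt_eq_infinite_ball[of z SN] by auto
  moreover have "SN \<inter> ball z 1 \<subseteq> SN \<inter> cball z 1" by auto
  ultimately show False using SN_finite_cball finite_subset by blast
qed

lemma closed_SN: "closed SN"
  using SN_nolimpt closed_limpt by blast

lemma countable_SN: "countable SN"
proof -
  have "SN = (\<Union>m::nat. SN \<inter> cball 0 (real m))"
  proof (rule set_eqI, rule iffI)
    fix x assume "x \<in> SN"
    obtain m::nat where "norm x \<le> real m" using real_arch_simple by blast
    then show "x \<in> (\<Union>m::nat. SN \<inter> cball 0 (real m))" using \<open>x \<in> SN\<close> by auto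
  qed blast
  moreover have "countable (\<Union>m::nat. SN \<inter> cball 0 (real m))"
    using SN_finite_cball by (intro countable_UN) (auto intro: countable_finite)
  ultimately show ?thesis by simp
qed

lemma open_Om: "open Om" unfolding Om_def using closed_SN by (simp add: closed_open)

lemma connected_Om: "connected Om"
proof -
  have "connected (UNIV - SN)"
    by (rule connected_open_diff_countable[OF _ open_UNIV connected_UNIV countable_SN]) simp
  moreover have "Om = UNIV - SN" unfolding Om_def by blast
  ultimately show ?thesis by simp
qed

lemma Om_notS: "z \<in> Om \<Longrightarrow> z \<notin> S"
proof
  assume "z \<in> Om" "z \<in> S"
  then have "z + of_nat 0 \<in> SN" unfolding SN_def by blast
  then show False using \<open>z \<in> Om\<close> unfolding Om_def by simp
qed

lemma Om_sub: "Om \<subseteq> - S" using Om_notS by auto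

lemma Om_shift: "z \<in> Om \<Longrightarrow> z - of_nat k \<in> Om"
proof -
  assume z: "z \<in> Om"
  show ?thesis
  proof (rule ccontr)
    assume "z - of_nat k \<notin> Om"
    then have "z - of_nat k \<in> SN" unfolding Om_def by simp
    then obtain w n where wn: "w \<in> S" "z - of_nat k = w + of_nat n" unfolding SN_def by blast
    then have "z = w + of_nat (n + k)" by (simp add: algebra_simps)
    then have "z \<in> SN" unfolding SN_def using wn(1) by blast
    then show False using z unfolding Om_def by simp
  qed
qed

lemma Om_left: "Re z \<le> -1 \<Longrightarrow> z \<in> Om"
proof (rule ccontr)
  assume "Re z \<le> -1" "z \<notin> Om"
  then have "z \<in> SN" unfolding Om_def by simp
  then obtain w n where wn: "w \<in> S" "z = w + of_nat n" unfolding SN_def by blast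
  then have "Re w \<le> -1" using \<open>Re z \<le> -1\<close> by simp
  then show False using noS_left[of w] wn(1) by simp
qed

lemma punctured_Om: obtains r where "r > 0" "cball z r - {z} \<subseteq> Om"
proof -
  have "\<not> z islimpt SN" by (rule SN_nolimpt)
  then obtain T where T: "z \<in> T" "open T" "\<forall>y\<in>T. y \<in> SN \<longrightarrow> y = z"
    unfolding islimpt_def by blast
  then obtain e where e: "e > 0" "ball z e \<subseteq> T" using open_contains_ball by blast
  show ?thesis
  proof (rule that[of "e/2"])
    show "cball z (e/2) - {z} \<subseteq> Om"
    proof
      fix y assume y: "y \<in> cball z (e/2) - {z}"
      then have "y \<in> T" using e by (auto simp: dist_commute)
      then show "y \<in> Om" using y T unfolding Om_def by auto
    qed
  qed (use e in auto)
qed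

lemma punctured_S: obtains r where "r > 0" "cball z r - {z} \<subseteq> - S"
proof -
  obtain r where "r > 0" "cball z r - {z} \<subseteq> Om" by (rule punctured_Om)
  then show ?thesis using Om_sub that[of r] by (meson order_trans)
qed

end

lemma powr_exp_bound:
  fixes a c :: real assumes "c > 0" "a \<ge> 0"
  obtains K where "K > 0" "\<And>u. u > 0 \<Longrightarrow> u powr a \<le> K * exp (c * u)"
proof -
  have "((\<lambda>u. u powr a / exp (c*u)) \<longlongrightarrow> 0) at_top" using assms by real_asymp
  then have "eventually (\<lambda>u. u powr a / exp (c*u) < 1) at_top" by (rule order_tendstoD) simp
  then obtain U where U: "\<And>u. u \<ge> U \<Longrightarrow> u powr a / exp (c*u) < 1"
    by (auto simp: eventually_at_top_linorder)
  define K where "K = max U 1 powr a + 1"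
  have K1: "K \<ge> 1" unfolding K_def by simp
  show ?thesis
  proof (rule that[of K])
    show "K > 0" using K1 by simp
    fix u :: real assume u: "u > 0"
    have e1: "exp (c*u) \<ge> 1" using assms u by simp
    show "u powr a \<le> K * exp (c*u)"
    proof (cases "u \<ge> U")
      case True
      then have "u powr a < exp (c*u)" using U[OF True] by (simp add: divide_less_eq)
      also have "\<dots> \<le> K * exp (c*u)" using K1 by simp
      finally show ?thesis by simp
    next
      case False
      have "u powr a \<le> max U 1 powr a" using False u assms by (intro powr_mono2) auto
      also have "\<dots> \<le> K" unfolding K_def by simp
      also have "\<dots> \<le> K * exp (c*u)" using e1 K1 by simp
      finally show ?thesis .
    qed
  qed
qed

lemma sbm_mult:
  fixes g h :: "real \<Rightarrow> 'a::{second_countable_topology, real_normed_algebra}"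
  assumes "set_borel_measurable lborel A g" "h \<in> borel_measurable lborel"
  shows "set_borel_measurable lborel A (\<lambda>u. h u * g u)"
proof -
  have "(\<lambda>u. indicator A u *\<^sub>R (h u * g u)) = (\<lambda>u. h u * (indicator A u *\<^sub>R g u))"
    by (simp add: fun_eq_iff)
  moreover have "(\<lambda>u. h u * (indicator A u *\<^sub>R g u)) \<in> borel_measurable lborel"
    using assms unfolding set_borel_measurable_def by measurable
  ultimately show ?thesis unfolding set_borel_measurable_def by simp
qed

lemma sbm_norm:
  fixes g :: "real \<Rightarrow> 'a::{second_countable_topology, real_normed_vector}"
  assumes "set_borel_measurable lborel A g"
  shows "set_borel_measurable lborel A (\<lambda>u. norm (g u))"
proof -
  have "(\<lambda>u. indicator A u *\<^sub>R norm (g u)) = (\<lambda>u. norm (indicator A u *\<^sub>R g u))"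
    by (simp add: fun_eq_iff indicator_def)
  moreover have "(\<lambda>u. norm (indicator A u *\<^sub>R g u)) \<in> borel_measurable lborel"
    using assms unfolding set_borel_measurable_def by measurable
  ultimately show ?thesis unfolding set_borel_measurable_def by simp
qed

lemma sbm_of_real:
  assumes "set_borel_measurable lborel A (g :: real \<Rightarrow> real)"
  shows "set_borel_measurable lborel A (\<lambda>u. complex_of_real (g u))"
proof -
  have "(\<lambda>u. indicator A u *\<^sub>R complex_of_real (g u)) = (\<lambda>u. complex_of_real (indicator A u *\<^sub>R g u))"
    by (simp add: fun_eq_iff indicator_def)
  moreover have "(\<lambda>u. complex_of_real (indicator A u *\<^sub>R g u)) \<in> borel_measurable lborel"
    using assms unfolding set_borel_measurable_def by measurable
  ultimately show ?thesis unfolding set_borel_measurable_def by simp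
qed

context Hs
begin

lemma phi_meas: "set_borel_measurable lborel {0<..} \<phi>"
  using DLphi unfolding DL_def by blast

lemma normphi_meas: "set_borel_measurable lborel {0<..} (\<lambda>u. norm (\<phi> u))"
  by (rule sbm_norm[OF phi_meas])

lemma int_exp_phi:
  assumes "c > 0"
  shows "set_integrable lborel {0<..} (\<lambda>u. exp (- c * u) * norm (\<phi> u))"
proof -
  have "set_integrable lborel {0<..}
     (\<lambda>u. exp (- complex_of_real c * complex_of_real u) * complex_of_real (norm (\<phi> u)))"
    using DLphi assms unfolding DL_def by auto
  then have "set_integrable lborel {0<..}
     (\<lambda>u. norm (exp (- complex_of_real c * complex_of_real u) * complex_of_real (norm (\<phi> u))))"
    by (rule set_integrable_norm)
  moreover have "\<And>u. norm (exp (- complex_of_real c * complex_of_real u) * complex_of_real (norm (\<phi> u)))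
        = exp (- c * u) * norm (\<phi> u)"
    by (simp add: norm_mult exp_of_real[symmetric] del: exp_of_real)
  ultimately show ?thesis by simp
qed

lemma int_exp_phi_powr:
  assumes "c > 0" "a \<ge> 0"
  shows "set_integrable lborel {0<..} (\<lambda>u. exp (- c * u) * norm (\<phi> u) * u powr a)"
proof -
  obtain K where K: "K > 0" "\<And>u. u > 0 \<Longrightarrow> u powr a \<le> K * exp ((c/2) * u)"
    using powr_exp_bound[of "c/2" a] assms by auto
  have i: "set_integrable lborel {0<..} (\<lambda>u. K * (exp (- (c/2) * u) * norm (\<phi> u)))"
    by (rule set_integrable_mult_right, rule int_exp_phi) (use assms in simp)
  show ?thesis
  proof (rule set_integrable_bound[OF i])
    show "set_borel_measurable lborel {0<..} (\<lambda>u. exp (- c * u) * norm (\<phi> u) * u powr a)"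
    proof -
      have "set_borel_measurable lborel {0<..} (\<lambda>u. (exp (- c * u) * u powr a) * norm (\<phi> u))"
        by (rule sbm_mult[OF normphi_meas]) measurable
      then show ?thesis by (simp add: ac_simps)
    qed
    show "AE u\<in>{0<..} in lborel. norm (exp (- c * u) * norm (\<phi> u) * u powr a)
        \<le> norm (K * (exp (- (c/2) * u) * norm (\<phi> u)))"
    proof (rule AE_I2, rule impI)
      fix u :: real assume u: "u \<in> {0<..}"
      have "exp (- c * u) * u powr a \<le> exp (- c * u) * (K * exp ((c/2) * u))"
        using K(2)[of u] u by (intro mult_left_mono) auto
      also have "\<dots> = K * exp (- (c/2) * u)"
        by (simp add: exp_add[symmetric] algebra_simps)
      finally have "exp (- c * u) * u powr a * norm (\<phi> u) \<le> K * exp (- (c/2) * u) * norm (\<phi> u)"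
        by (intro mult_right_mono) auto
      then show "norm (exp (- c * u) * norm (\<phi> u) * u powr a)
        \<le> norm (K * (exp (- (c/2) * u) * norm (\<phi> u)))"
        using K(1) by (simp add: ac_simps abs_mult)
    qed
  qed
qed

end

lemma Re_pos_not_nonpos_Int: "Re z > 0 \<Longrightarrow> (z::complex) \<notin> \<int>\<^sub>\<le>\<^sub>0"
  by (auto elim!: nonpos_Ints_cases)

lemma exp_partial_le: "(x::real) \<ge> 0 \<Longrightarrow> (\<Sum>k<n. x^k / fact k) \<le> exp x"
proof -
  assume x: "x \<ge> 0"
  have "(\<lambda>k. x^k /\<^sub>R fact k) sums exp x" by (rule exp_converges)
  then have "(\<Sum>k<n. x^k /\<^sub>R fact k) \<le> exp x"
    using sum_le_suminf[of "\<lambda>k. x^k /\<^sub>R fact k" "{..<n}"] x by (auto simp: sums_iff)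
  then show ?thesis by (simp add: divide_inverse_commute)
qed

lemma exp_term_le: "(x::real) \<ge> 0 \<Longrightarrow> x^k / fact k \<le> exp x"
proof -
  assume x: "x \<ge> 0"
  have "x^k / fact k = (\<Sum>j\<in>{k}. x^j / fact j)" by simp
  also have "\<dots> \<le> (\<Sum>j<Suc k. x^j / fact j)" using x by (intro sum_mono2) auto
  also have "\<dots> \<le> exp x" by (rule exp_partial_le[OF x])
  finally show ?thesis .
qed

context Hs
begin

definition P :: "nat \<Rightarrow> complex \<Rightarrow> complex" where "P k z = (-1)^k * pochhammer (-z) k"
definition coef :: "real \<Rightarrow> nat \<Rightarrow> complex \<Rightarrow> complex" where
  "coef t0 k z = P k z * f (z - of_nat k) t0"
definition Tser :: "real \<Rightarrow> real \<Rightarrow> complex \<Rightarrow> complex" where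
  "Tser t0 t z = (\<Sum>k. complex_of_real ((t - t0)^k / fact k) * coef t0 k z)"

lemma norm_ofreal_powr: "u > 0 \<Longrightarrow> norm (complex_of_real u powr w) = u powr Re w"
  by (subst norm_powr_real_powr) auto

lemma series_left:
  assumes s: "Re s \<ge> 1" and t0: "t0 > 0" and tt: "\<bar>t - t0\<bar> < t0"
  shows "f (-s) t = Tser t0 t (-s)"
proof -
  have t: "t > 0" using tt by linarith
  define x where "x = \<bar>t - t0\<bar>"
  define c where "c = t0 - x"
  have c: "c > 0" "x \<ge> 0" using tt unfolding c_def x_def by auto
  have sG: "s \<notin> \<int>\<^sub>\<le>\<^sub>0" using s by (intro Re_pos_not_nonpos_Int) simp
  then have Gs: "Gamma s \<noteq> 0" by (simp add: Gamma_eq_zero_iff)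
  define \<phi>' where "\<phi>' u = \<phi> u * of_real u powr (s - 1) / Gamma s" for u
  define g where "g k u = complex_of_real (exp (-t0*u)) * \<phi>' u * complex_of_real ((-(t-t0)*u)^k / fact k)" for k u
  define B where "B u = exp (-t0*u) * norm (\<phi> u) * u powr (Re s - 1) / norm (Gamma s)" for u
  define M where "M u = exp (-c*u) * norm (\<phi> u) * u powr (Re s - 1) / norm (Gamma s)" for u
  have nd: "cmod (complex_of_real t0 - complex_of_real t) = \<bar>t - t0\<bar>"
    by (metis abs_minus_commute norm_of_real of_real_diff)
  have normg: "norm (g k u) = B u * ((x*u)^k / fact k)" if u: "u > 0" for k u
    using u norm_ofreal_powr[OF u, of "s - 1"] nd
    by (simp add: g_def \<phi>'_def B_def x_def norm_mult norm_divide norm_power abs_mult power_mult_distrib)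
  have BM: "B u * exp (x*u) = M u" for u
  proof -
    have "exp (-c*u) = exp (-t0*u) * exp (x*u)" by (simp add: c_def exp_add[symmetric] algebra_simps)
    then show ?thesis by (simp add: B_def M_def)
  qed
  have Bnn: "B u \<ge> 0" for u by (simp add: B_def)
  have Mint: "set_integrable lborel {0<..} M"
  proof -
    have "set_integrable lborel {0<..} (\<lambda>u. (1 / norm (Gamma s)) * (exp (- c * u) * norm (\<phi> u) * u powr (Re s - 1)))"
      by (rule set_integrable_mult_right, rule int_exp_phi_powr) (use c s in auto)
    then show ?thesis unfolding M_def by simp
  qed
  have gmeas: "set_borel_measurable lborel {0<..} (g k)" for k
  proof -
    have "set_borel_measurable lborel {0<..} (\<lambda>u. (complex_of_real (exp (-t0*u)) * (of_real u powr (s - 1) / Gamma s)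
           * complex_of_real ((-(t-t0)*u)^k / fact k)) * \<phi> u)"
      by (rule sbm_mult[OF phi_meas]) measurable
    moreover have "g k = (\<lambda>u. (complex_of_real (exp (-t0*u)) * (of_real u powr (s - 1) / Gamma s)
           * complex_of_real ((-(t-t0)*u)^k / fact k)) * \<phi> u)"
      using Gs by (simp add: fun_eq_iff g_def \<phi>'_def field_simps)
    ultimately show ?thesis by simp
  qed
  have gint: "set_integrable lborel {0<..} (g k)" for k
  proof (rule set_integrable_bound[OF Mint gmeas])
    show "AE u\<in>{0<..} in lborel. norm (g k u) \<le> norm (M u)"
    proof (rule AE_I2, rule impI)
      fix u :: real assume "u \<in> {0<..}"
      then have u: "u > 0" by simp
      have "norm (g k u) = B u * ((x*u)^k / fact k)" by (rule normg[OF u])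
      also have "\<dots> \<le> B u * exp (x*u)"
        using c u by (intro mult_left_mono exp_term_le Bnn) auto
      also have "\<dots> = M u" by (rule BM)
      finally show "norm (g k u) \<le> norm (M u)" by simp
    qed
  qed
  have coef_eq: "complex_of_real ((t - t0)^k / fact k) * coef t0 k (-s) = (LINT u:{0<..}|lborel. g k u)" for k
  proof -
    have sk: "Re (s + of_nat k) \<ge> 1" using s by simp
    have skG: "s + of_nat k \<notin> \<int>\<^sub>\<le>\<^sub>0" using sk by (intro Re_pos_not_nonpos_Int) simp
    then have Gsk: "Gamma (s + of_nat k) \<noteq> 0" by (simp add: Gamma_eq_zero_iff)
    have "f (- s - of_nat k) t0 = f (- (s + of_nat k)) t0" by (simp add: algebra_simps)
    also have "\<dots> = Laplace (\<lambda>u. \<phi> u * of_real u powr (s + of_nat k - 1) / Gamma (s + of_nat k)) t0"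
      by (rule lap[OF sk t0])
    finally have fk: "f (- s - of_nat k) t0 = (LINT u:{0<..}|lborel.
        complex_of_real (exp (- t0 * u)) * (\<phi> u * of_real u powr (s + of_nat k - 1) / Gamma (s + of_nat k)))"
      unfolding Laplace_def .
    have P: "P k (-s) = (-1)^k * (Gamma (s + of_nat k) / Gamma s)"
      unfolding P_def using pochhammer_Gamma[OF sG, of k] by simp
    have "complex_of_real ((t - t0)^k / fact k) * coef t0 k (-s)
      = (LINT u:{0<..}|lborel. complex_of_real ((t - t0)^k / fact k) * ((-1)^k * (Gamma (s + of_nat k) / Gamma s)) *
          (complex_of_real (exp (- t0 * u)) * (\<phi> u * of_real u powr (s + of_nat k - 1) / Gamma (s + of_nat k))))"
      unfolding coef_def P fk set_integral_mult_right by (simp add: ac_simps)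
    also have "\<dots> = (LINT u:{0<..}|lborel. g k u)"
    proof (rule set_lebesgue_integral_cong)
      show "{0::real<..} \<in> sets lborel" by simp
      show "\<forall>u. u \<in> {0<..} \<longrightarrow> complex_of_real ((t - t0)^k / fact k) * ((-1)^k * (Gamma (s + of_nat k) / Gamma s)) *
          (complex_of_real (exp (- t0 * u)) * (\<phi> u * of_real u powr (s + of_nat k - 1) / Gamma (s + of_nat k))) = g k u"
      proof (intro allI impI)
        fix u :: real assume "u \<in> {0<..}"
        then have u: "u > 0" by simp
        have pw: "complex_of_real u powr (s + of_nat k - 1) = complex_of_real u powr (s - 1) * complex_of_real u ^ k"
        proof -
          have "complex_of_real u powr (s + of_nat k - 1) = complex_of_real u powr ((s - 1) + of_nat k)"
            by (simp add: algebra_simps)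
          also have "\<dots> = complex_of_real u powr (s - 1) * complex_of_real u powr of_nat k"
            by (rule powr_add)
          also have "complex_of_real u powr of_nat k = complex_of_real u ^ k"
            using u by (simp add: powr_nat')
          finally show ?thesis .
        qed
        show "complex_of_real ((t - t0)^k / fact k) * ((-1)^k * (Gamma (s + of_nat k) / Gamma s)) *
          (complex_of_real (exp (- t0 * u)) * (\<phi> u * of_real u powr (s + of_nat k - 1) / Gamma (s + of_nat k))) = g k u"
        proof -
          have e1: "complex_of_real ((-(t-t0)*u)^k / fact k) = (-1)^k * complex_of_real ((t-t0)^k / fact k) * complex_of_real u ^ k"
          proof -
            have "(-(t-t0)*u)^k = ((-1) * (t-t0) * u)^k" by simp
            also have "\<dots> = (-1)^k * (t-t0)^k * u^k" by (simp only: power_mult_distrib)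
            finally have r: "(-(t-t0)*u)^k / fact k = (-1)^k * ((t-t0)^k / fact k) * u^k" by simp
            show ?thesis unfolding r by simp
          qed
          define c where "c = complex_of_real ((t-t0)^k / fact k)"
          define E where "E = complex_of_real (exp (- t0 * u))"
          define W where "W = complex_of_real u powr (s - 1)"
          define V where "V = complex_of_real u ^ k"
          define G1 where "G1 = Gamma (s + of_nat k)"
          define G0 where "G0 = Gamma s"
          have "c * ((-1)^k * (G1 / G0)) * (E * (\<phi> u * (W * V) / G1)) = E * (\<phi> u * W / G0) * ((-1)^k * c * V)"
            using Gsk Gs unfolding G1_def[symmetric] G0_def[symmetric] by (simp add: field_simps)
          then show ?thesis unfolding pw g_def \<phi>'_def e1 c_def E_def W_def V_def G1_def G0_def by simp
        qed
      qed
    qed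
    finally show ?thesis .
  qed
  define F where "F k u = indicator {0<..} u *\<^sub>R g k u" for k u
  have Fint: "integrable lborel (F k)" for k using gint[of k] unfolding F_def set_integrable_def .
  have normF: "norm (F k u) = indicator {0<..} u * (B u * ((x*u)^k / fact k))" for k u
    by (cases "u > 0") (auto simp: F_def normg indicator_def)
  have sumsF: "(\<lambda>k. F k u) sums (indicator {0<..} u *\<^sub>R (complex_of_real (exp (-t*u)) * \<phi>' u))" for u
  proof (cases "u > 0")
    case True
    have "(\<lambda>k. (-(t-t0)*u)^k /\<^sub>R fact k) sums exp (-(t-t0)*u)" by (rule exp_converges)
    then have "(\<lambda>k. complex_of_real ((-(t-t0)*u)^k / fact k)) sums complex_of_real (exp (-(t-t0)*u))"
      by (intro sums_of_real) (simp add: divide_inverse_commute)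
    then have s1: "(\<lambda>k. (complex_of_real (exp (-t0*u)) * \<phi>' u) * complex_of_real ((-(t-t0)*u)^k / fact k))
       sums ((complex_of_real (exp (-t0*u)) * \<phi>' u) * complex_of_real (exp (-(t-t0)*u)))"
      by (rule sums_mult)
    have e1: "(complex_of_real (exp (-t0*u)) * \<phi>' u) * complex_of_real (exp (-(t-t0)*u))
        = complex_of_real (exp (-t*u)) * \<phi>' u"
    proof -
      have ee: "exp (-t0*u) * exp (-(t-t0)*u) = exp (-t*u)" by (simp add: exp_add[symmetric] algebra_simps)
      have "(complex_of_real (exp (-t0*u)) * \<phi>' u) * complex_of_real (exp (-(t-t0)*u))
          = complex_of_real (exp (-t0*u) * exp (-(t-t0)*u)) * \<phi>' u"
        by (simp only: of_real_mult ac_simps)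
      then show ?thesis unfolding ee .
    qed
    have F1: "(\<lambda>k. F k u) = (\<lambda>k. (complex_of_real (exp (-t0*u)) * \<phi>' u) * complex_of_real ((-(t-t0)*u)^k / fact k))"
      using True by (simp add: F_def g_def fun_eq_iff)
    have "(\<lambda>k. F k u) sums (complex_of_real (exp (-t*u)) * \<phi>' u)"
      using s1 unfolding F1 e1 .
    then show ?thesis using True by simp
  next
    case False
    then show ?thesis by (simp add: F_def)
  qed
  have AEsum: "AE u in lborel. summable (\<lambda>k. norm (F k u))"
  proof (rule AE_I2)
    fix u :: real
    have "summable (\<lambda>k. (x*u)^k /\<^sub>R fact k)" using exp_converges sums_summable by blast
    then have "summable (\<lambda>k. indicator {0<..} u * B u * ((x*u)^k / fact k))"
      by (intro summable_mult) (simp add: divide_inverse_commute)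
    then show "summable (\<lambda>k. norm (F k u))" by (simp add: normF ac_simps)
  qed
  have sumint: "summable (\<lambda>k. LINT u|lborel. norm (F k u))"
  proof (rule summableI_nonneg_bounded)
    show "0 \<le> (LINT u|lborel. norm (F k u))" for k by simp
    fix n
    have "(\<Sum>k<n. LINT u|lborel. norm (F k u)) = (LINT u|lborel. (\<Sum>k<n. norm (F k u)))"
      by (rule Bochner_Integration.integral_sum[symmetric]) (use Fint in auto)
    also have "\<dots> \<le> (LINT u|lborel. indicator {0<..} u * M u)"
    proof (rule integral_mono)
      show "integrable lborel (\<lambda>u. \<Sum>k<n. norm (F k u))" using Fint by auto
      show "integrable lborel (\<lambda>u. indicator {0<..} u * M u)"
        using Mint unfolding set_integrable_def by simp
      fix u :: real
      show "(\<Sum>k<n. norm (F k u)) \<le> indicator {0<..} u * M u"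
      proof (cases "u > 0")
        case True
        have "(\<Sum>k<n. norm (F k u)) = B u * (\<Sum>k<n. (x*u)^k / fact k)"
          using True by (simp add: normF sum_distrib_left)
        also have "\<dots> \<le> B u * exp (x*u)"
          using True c by (intro mult_left_mono exp_partial_le Bnn) auto
        finally show ?thesis using True BM by simp
      qed (simp add: normF)
    qed
    finally show "(\<Sum>k<n. LINT u|lborel. norm (F k u)) \<le> (LINT u|lborel. indicator {0<..} u * M u)" .
  qed
  have "(LINT u|lborel. (\<Sum>k. F k u)) = (\<Sum>k. LINT u|lborel. F k u)"
    by (rule integral_suminf[OF Fint AEsum sumint])
  moreover have "(\<lambda>u. \<Sum>k. F k u) = (\<lambda>u. indicator {0<..} u *\<^sub>R (complex_of_real (exp (-t*u)) * \<phi>' u))"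
    using sumsF by (simp add: fun_eq_iff sums_iff)
  moreover have "(LINT u|lborel. F k u) = complex_of_real ((t - t0)^k / fact k) * coef t0 k (-s)" for k
    using coef_eq[of k] unfolding F_def set_lebesgue_integral_def by simp
  ultimately have "(LINT u|lborel. indicator {0<..} u *\<^sub>R (complex_of_real (exp (-t*u)) * \<phi>' u)) = Tser t0 t (-s)"
    unfolding Tser_def by simp
  moreover have "f (-s) t = (LINT u|lborel. indicator {0<..} u *\<^sub>R (complex_of_real (exp (-t*u)) * \<phi>' u))"
    using lap[OF s t] unfolding Laplace_def set_lebesgue_integral_def \<phi>'_def by simp
  ultimately show ?thesis by simp
qed

end


lemma powr_le_1_plus: "u > 0 \<Longrightarrow> 0 \<le> a \<Longrightarrow> a \<le> B \<Longrightarrow> (u::real) powr a \<le> 1 + u powr B"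
proof (cases "u \<le> 1")
  case True
  assume "u > 0" "0 \<le> a"
  then have "u powr a \<le> 1" using True powr_mono2[of a u 1] by simp
  then show ?thesis by (smt (verit) powr_ge_zero)
next
  case False
  assume "u > 0" "0 \<le> a" "a \<le> B"
  then have "u powr a \<le> u powr B" using False by (intro powr_mono) auto
  then show ?thesis by simp
qed

context Hs
begin

lemma coef_tail:
  assumes t0: "t0 > 0" and zm: "Re z \<le> real m - 1"
  shows "coef t0 (m + j) z = P m z * (-1)^j * rGamma (of_nat m - z) *
     (LINT u:{0<..}|lborel. complex_of_real (exp (-t0*u)) * (\<phi> u * of_real u powr (of_nat m - z - 1) * of_real u ^ j))"
proof -
  define w where "w = of_nat m - z"
  have w1: "Re w \<ge> 1" using zm unfolding w_def by simp
  have wj: "Re (w + of_nat j) \<ge> 1" using w1 by simp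
  have Pmj: "P (m + j) z = P m z * (-1)^j * pochhammer w j"
    unfolding P_def pochhammer_product' w_def by (simp add: power_add algebra_simps)
  have "f (z - of_nat (m + j)) t0 = f (- (w + of_nat j)) t0" unfolding w_def by (simp add: algebra_simps)
  also have "\<dots> = Laplace (\<lambda>u. \<phi> u * of_real u powr (w + of_nat j - 1) / Gamma (w + of_nat j)) t0"
    by (rule lap[OF wj t0])
  finally have fk: "f (z - of_nat (m + j)) t0 = (LINT u:{0<..}|lborel.
     complex_of_real (exp (- t0 * u)) * (\<phi> u * of_real u powr (w + of_nat j - 1) / Gamma (w + of_nat j)))"
    unfolding Laplace_def .
  have "coef t0 (m + j) z = (LINT u:{0<..}|lborel. (P m z * (-1)^j * pochhammer w j) *
     (complex_of_real (exp (- t0 * u)) * (\<phi> u * of_real u powr (w + of_nat j - 1) / Gamma (w + of_nat j))))"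
    unfolding coef_def Pmj fk set_integral_mult_right by simp
  also have "\<dots> = (LINT u:{0<..}|lborel. (P m z * (-1)^j * rGamma w) *
     (complex_of_real (exp (-t0*u)) * (\<phi> u * of_real u powr (w - 1) * of_real u ^ j)))"
  proof (rule set_lebesgue_integral_cong)
    show "{0::real<..} \<in> sets lborel" by simp
    show "\<forall>u. u \<in> {0<..} \<longrightarrow> (P m z * (-1)^j * pochhammer w j) *
     (complex_of_real (exp (- t0 * u)) * (\<phi> u * of_real u powr (w + of_nat j - 1) / Gamma (w + of_nat j)))
      = (P m z * (-1)^j * rGamma w) *
     (complex_of_real (exp (-t0*u)) * (\<phi> u * of_real u powr (w - 1) * of_real u ^ j))"
    proof (intro allI impI)
      fix u :: real assume "u \<in> {0<..}"
      then have u: "u > 0" by simp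
      have pw: "complex_of_real u powr (w + of_nat j - 1) = complex_of_real u powr (w - 1) * complex_of_real u ^ j"
      proof -
        have "complex_of_real u powr (w + of_nat j - 1) = complex_of_real u powr ((w - 1) + of_nat j)"
          by (simp add: algebra_simps)
        also have "\<dots> = complex_of_real u powr (w - 1) * complex_of_real u powr of_nat j"
          by (rule powr_add)
        also have "complex_of_real u powr of_nat j = complex_of_real u ^ j"
          using u by (simp add: powr_nat')
        finally show ?thesis .
      qed
      have rg: "rGamma w = pochhammer w j * rGamma (w + of_nat j)" by (rule pochhammer_rGamma)
      have ig: "X / Gamma (w + of_nat j) = X * rGamma (w + of_nat j)" for X
        by (simp add: rGamma_inverse_Gamma divide_inverse)
      show "(P m z * (-1)^j * pochhammer w j) *
       (complex_of_real (exp (- t0 * u)) * (\<phi> u * of_real u powr (w + of_nat j - 1) / Gamma (w + of_nat j)))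
        = (P m z * (-1)^j * rGamma w) *
       (complex_of_real (exp (-t0*u)) * (\<phi> u * of_real u powr (w - 1) * of_real u ^ j))"
        unfolding pw ig rg by (simp only: ac_simps)
    qed
  qed
  also have "\<dots> = P m z * (-1)^j * rGamma w *
     (LINT u:{0<..}|lborel. complex_of_real (exp (-t0*u)) * (\<phi> u * of_real u powr (w - 1) * of_real u ^ j))"
    by (rule set_integral_mult_right)
  finally show ?thesis unfolding w_def .
qed

end

context Hs
begin

definition Jb :: "real \<Rightarrow> real \<Rightarrow> nat \<Rightarrow> real" where
  "Jb t0 B j = (LINT u:{0<..}|lborel. exp (-t0*u) * norm (\<phi> u) * (u powr real j + u powr (B + real j)))"

lemma int_J:
  assumes "c > 0" "a \<ge> 0" "b \<ge> 0"
  shows "set_integrable lborel {0<..} (\<lambda>u. exp (-c*u) * norm (\<phi> u) * (u powr a + u powr b))"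
proof -
  have "set_integrable lborel {0<..} (\<lambda>u. exp (-c*u) * norm (\<phi> u) * u powr a + exp (-c*u) * norm (\<phi> u) * u powr b)"
    by (intro set_integral_add(1) int_exp_phi_powr) (use assms in auto)
  then show ?thesis by (simp add: algebra_simps)
qed

lemma set_integral_nonneg_real:
  assumes "\<And>u. u \<in> A \<Longrightarrow> 0 \<le> g u" shows "0 \<le> (LINT u:A|lborel. (g u :: real))"
  unfolding set_lebesgue_integral_def by (rule Bochner_Integration.integral_nonneg) (use assms in \<open>auto simp: indicator_def\<close>)

lemma Jb_nonneg: "Jb t0 B j \<ge> 0"
  unfolding Jb_def by (intro set_integral_nonneg_real) auto

lemma Jb_summable:
  assumes t0: "t0 > 0" and d: "0 \<le> \<delta>" "\<delta> < t0" and B: "B \<ge> 0"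
  shows "summable (\<lambda>j. \<delta>^j / fact j * Jb t0 B j)"
proof (rule summableI_nonneg_bounded)
  show "0 \<le> \<delta>^j / fact j * Jb t0 B j" for j using d Jb_nonneg by simp
  fix n
  define g where "g j u = \<delta>^j / fact j * (indicator {0<..} u *\<^sub>R (exp (-t0*u) * norm (\<phi> u) * (u powr real j + u powr (B + real j))))" for j u
  define G where "G u = indicator {0<..} u * (exp (-(t0-\<delta>)*u) * norm (\<phi> u) * (u powr 0 + u powr B))" for u
  have gint: "integrable lborel (g j)" for j
  proof -
    have "set_integrable lborel {0<..} (\<lambda>u. exp (-t0*u) * norm (\<phi> u) * (u powr real j + u powr (B + real j)))"
      by (intro int_J) (use t0 B in auto)
    then have "integrable lborel (\<lambda>u. \<delta>^j / fact j * (indicator {0<..} u *\<^sub>R (exp (-t0*u) * norm (\<phi> u) * (u powr real j + u powr (B + real j)))))"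
      unfolding set_integrable_def by (rule integrable_mult_right)
    then show ?thesis unfolding g_def .
  qed
  have Gint: "integrable lborel G"
  proof -
    have "set_integrable lborel {0<..} (\<lambda>u. exp (-(t0-\<delta>)*u) * norm (\<phi> u) * (u powr 0 + u powr B))"
      by (intro int_J) (use d B in auto)
    then show ?thesis unfolding set_integrable_def G_def by simp
  qed
  have "(\<Sum>j<n. \<delta>^j / fact j * Jb t0 B j) = (\<Sum>j<n. LINT u|lborel. g j u)"
    unfolding Jb_def set_lebesgue_integral_def g_def
    by (intro sum.cong refl) (rule integral_mult_right_zero[symmetric])
  also have "\<dots> = (LINT u|lborel. (\<Sum>j<n. g j u))"
    by (rule Bochner_Integration.integral_sum[symmetric]) (use gint in auto)
  also have "\<dots> \<le> (LINT u|lborel. G u)"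
  proof (rule integral_mono)
    show "integrable lborel (\<lambda>u. \<Sum>j<n. g j u)" using gint by auto
    show "integrable lborel G" by (rule Gint)
    fix u :: real
    show "(\<Sum>j<n. g j u) \<le> G u"
    proof (cases "u > 0")
      case True
      have eq: "g j u = exp (-t0*u) * norm (\<phi> u) * (1 + u powr B) * ((\<delta>*u)^j / fact j)" for j
        using True by (simp add: g_def powr_add powr_realpow power_mult_distrib algebra_simps)
      have "(\<Sum>j<n. g j u) = exp (-t0*u) * norm (\<phi> u) * (1 + u powr B) * (\<Sum>j<n. (\<delta>*u)^j / fact j)"
        unfolding eq by (simp add: sum_distrib_left)
      also have "\<dots> \<le> exp (-t0*u) * norm (\<phi> u) * (1 + u powr B) * exp (\<delta>*u)"
        using True d by (intro mult_left_mono exp_partial_le) auto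
      also have "\<dots> = G u"
      proof -
        have "exp (-(t0-\<delta>)*u) = exp (-t0*u) * exp (\<delta>*u)" by (simp add: exp_add[symmetric] algebra_simps)
        then show ?thesis using True by (simp add: G_def)
      qed
      finally show ?thesis .
    next
      case False
      then show ?thesis by (simp add: g_def G_def)
    qed
  qed
  finally show "(\<Sum>j<n. \<delta>^j / fact j * Jb t0 B j) \<le> (LINT u|lborel. G u)" .
qed

lemma coef_tail_bound:
  assumes t0: "t0 > 0" and zm: "Re z \<le> real m - 1" and zR: "Re z \<ge> - R - 1" and B: "B = real m + R"
  shows "norm (coef t0 (m + j) z) \<le> norm (P m z * rGamma (of_nat m - z)) * Jb t0 B j"
proof -
  define a where "a = real m - Re z - 1"
  have a: "0 \<le> a" "a \<le> B" using zm zR B unfolding a_def by auto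
  define h where "h u = complex_of_real (exp (-t0*u)) * (\<phi> u * of_real u powr (of_nat m - z - 1) * of_real u ^ j)" for u
  define H where "H u = exp (-t0*u) * norm (\<phi> u) * (u powr real j + u powr (B + real j))" for u
  have Hint: "set_integrable lborel {0<..} H"
    unfolding H_def by (rule int_J) (use t0 a in auto)
  have nh: "norm (h u) \<le> H u" if u: "u > 0" for u
  proof -
    have "norm (h u) = exp (-t0*u) * norm (\<phi> u) * (u powr a * u ^ j)"
      using u norm_ofreal_powr[OF u, of "of_nat m - z - 1"]
      by (simp add: h_def a_def norm_mult norm_power)
    also have "\<dots> \<le> exp (-t0*u) * norm (\<phi> u) * ((1 + u powr B) * u ^ j)"
      using u a powr_le_1_plus[OF u a(1) a(2)] by (intro mult_left_mono mult_right_mono) auto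
    also have "\<dots> = H u"
      using u by (simp add: H_def powr_add powr_realpow algebra_simps)
    finally show ?thesis .
  qed
  have hmeas: "set_borel_measurable lborel {0<..} h"
  proof -
    have "set_borel_measurable lborel {0<..} (\<lambda>u. (complex_of_real (exp (-t0*u)) * (of_real u powr (of_nat m - z - 1) * of_real u ^ j)) * \<phi> u)"
      by (rule sbm_mult[OF phi_meas]) measurable
    moreover have "h = (\<lambda>u. (complex_of_real (exp (-t0*u)) * (of_real u powr (of_nat m - z - 1) * of_real u ^ j)) * \<phi> u)"
      by (simp add: h_def fun_eq_iff ac_simps)
    ultimately show ?thesis by simp
  qed
  have hint: "set_integrable lborel {0<..} h"
  proof (rule set_integrable_bound[OF Hint hmeas])
    show "AE u\<in>{0<..} in lborel. norm (h u) \<le> norm (H u)"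
      by (rule AE_I2) (use nh in \<open>auto intro: order_trans[OF _ abs_ge_self]\<close>)
  qed
  have "norm (LINT u:{0<..}|lborel. h u) \<le> (LINT u:{0<..}|lborel. norm (h u))"
    by (rule set_integral_norm_bound[OF hint])
  also have "\<dots> \<le> (LINT u:{0<..}|lborel. H u)"
    by (rule set_integral_mono[OF set_integrable_norm[OF hint] Hint]) (use nh in auto)
  finally have I: "norm (LINT u:{0<..}|lborel. h u) \<le> Jb t0 B j" unfolding Jb_def H_def .
  have "norm (coef t0 (m + j) z) = norm (P m z * rGamma (of_nat m - z)) * norm (LINT u:{0<..}|lborel. h u)"
    unfolding coef_tail[OF t0 zm] h_def by (simp add: norm_mult norm_power)
  also have "\<dots> \<le> norm (P m z * rGamma (of_nat m - z)) * Jb t0 B j"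
    by (intro mult_left_mono I) auto
  finally show ?thesis .
qed

lemma P_holo: "P k holomorphic_on A"
  unfolding P_def pochhammer_prod by (intro holomorphic_intros)

lemma coef_holo:
  assumes t0: "t0 > 0" shows "coef t0 k holomorphic_on Om"
proof -
  have "(\<lambda>z. f z t0) \<circ> (\<lambda>z. z - of_nat k) holomorphic_on Om"
  proof (rule holomorphic_on_compose_gen[OF _ holf[OF t0]])
    show "(\<lambda>z. z - of_nat k) holomorphic_on Om" by (intro holomorphic_intros)
    show "(\<lambda>z. z - of_nat k) ` Om \<subseteq> - S" using Om_shift Om_sub by auto
  qed
  then have "(\<lambda>z. f (z - of_nat k) t0) holomorphic_on Om" by (simp add: o_def)
  then show ?thesis unfolding coef_def[abs_def] by (intro holomorphic_intros P_holo)
qed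

lemma coef_cont: "t0 > 0 \<Longrightarrow> continuous_on Om (coef t0 k)"
  using coef_holo holomorphic_on_imp_continuous_on by blast

end


context Hs
begin

lemma bounded_on_compact:
  assumes "compact K" "continuous_on K g"
  shows "\<exists>H\<ge>0. \<forall>z\<in>K. norm (g z :: complex) \<le> H"
proof -
  have "bounded (g ` K)" using assms compact_continuous_image compact_imp_bounded by blast
  then obtain a where a: "\<forall>x\<in>g ` K. norm x \<le> a" unfolding bounded_iff by blast
  then have "\<forall>z\<in>K. norm (g z) \<le> max a 0" by fastforce
  then show ?thesis by (intro exI[of _ "max a 0"]) simp
qed

lemma unif_bound:
  assumes t0: "t0 > 0" and K: "compact K" "K \<subseteq> Om" and d: "0 \<le> \<delta>" "\<delta> < t0"
  obtains M where "summable M"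
    "\<And>k z t. z \<in> K \<Longrightarrow> \<bar>t - t0\<bar> \<le> \<delta> \<Longrightarrow>
        norm (complex_of_real ((t - t0)^k / fact k) * coef t0 k z) \<le> M k"
proof -
  have "bounded K" using K compact_imp_bounded by blast
  then obtain R0 where R0: "\<forall>z\<in>K. norm z \<le> R0" unfolding bounded_iff by blast
  define R where "R = max R0 0"
  have R: "R \<ge> 0" "\<And>z. z \<in> K \<Longrightarrow> norm z \<le> R" using R0 unfolding R_def by auto
  define m where "m = nat \<lceil>R\<rceil> + 1"
  have zm: "Re z \<le> real m - 1" if "z \<in> K" for z
  proof -
    have "Re z \<le> norm z" by (rule complex_Re_le_cmod)
    also have "\<dots> \<le> R" using R(2)[OF that] .
    also have "\<dots> \<le> real m - 1" unfolding m_def using R(1) by linarith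
    finally show ?thesis .
  qed
  have zR: "Re z \<ge> - R - 1" if "z \<in> K" for z
  proof -
    have "- Re z \<le> norm z" using abs_Re_le_cmod[of z] by linarith
    then show ?thesis using R(2)[OF that] by linarith
  qed
  define B where "B = real m + R"
  have ex: "\<exists>H. H \<ge> 0 \<and> (\<forall>z\<in>K. norm (coef t0 k z) \<le> H)" for k
  proof -
    have "continuous_on K (coef t0 k)" using coef_cont[OF t0] K(2) by (rule continuous_on_subset)
    from bounded_on_compact[OF K(1) this] show ?thesis .
  qed
  define H where "H k = (SOME H. H \<ge> 0 \<and> (\<forall>z\<in>K. norm (coef t0 k z) \<le> H))" for k
  have H: "\<And>k. H k \<ge> 0" "\<And>k z. z \<in> K \<Longrightarrow> norm (coef t0 k z) \<le> H k"
    using someI_ex[OF ex] unfolding H_def by blast+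
  have "(\<lambda>z. P m z * rGamma (of_nat m - z)) holomorphic_on K"
  proof -
    have "(\<lambda>z. rGamma (of_nat m - z)) holomorphic_on K"
      by (intro holomorphic_rGamma' holomorphic_intros)
    then show ?thesis by (intro holomorphic_intros P_holo)
  qed
  then have "continuous_on K (\<lambda>z. P m z * rGamma (of_nat m - z))"
    by (rule holomorphic_on_imp_continuous_on)
  from bounded_on_compact[OF K(1) this] obtain C
    where C0: "C \<ge> 0" and C1: "\<forall>z\<in>K. norm (P m z * rGamma (of_nat m - z)) \<le> C" by blast
  have C: "C \<ge> 0" "\<And>z. z \<in> K \<Longrightarrow> norm (P m z * rGamma (of_nat m - z)) \<le> C"
    using C0 C1 by auto
  define M where "M k = (if k < m then \<delta>^k / fact k * H k
      else \<delta>^m * (C * (\<delta>^(k-m) / fact (k-m) * Jb t0 B (k-m))))" for k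
  show ?thesis
  proof (rule that[of M])
    have "summable (\<lambda>j. \<delta>^m * (C * (\<delta>^j / fact j * Jb t0 B j)))"
      by (intro summable_mult Jb_summable) (use t0 d R in \<open>auto simp: B_def\<close>)
    moreover have "M (j + m) = \<delta>^m * (C * (\<delta>^j / fact j * Jb t0 B j))" for j
      by (simp add: M_def)
    ultimately show "summable M" using summable_iff_shift[of M m] by simp
    fix k z t assume z: "z \<in> K" and t: "\<bar>t - t0\<bar> \<le> \<delta>"
    have dk: "\<bar>t - t0\<bar>^k \<le> \<delta>^k" using t by (intro power_mono) auto
    have nt: "norm (complex_of_real ((t - t0)^k / fact k) * coef t0 k z) = \<bar>t - t0\<bar>^k / fact k * norm (coef t0 k z)"
    proof -
      define r where "r = (t - t0)^k / fact k"
      have "\<bar>r\<bar> = \<bar>t - t0\<bar>^k / fact k" by (simp add: r_def power_abs)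
      moreover have "norm (complex_of_real r * coef t0 k z) = \<bar>r\<bar> * norm (coef t0 k z)" by (simp add: norm_mult)
      ultimately show ?thesis unfolding r_def by simp
    qed
    show "norm (complex_of_real ((t - t0)^k / fact k) * coef t0 k z) \<le> M k"
    proof (cases "k < m")
      case True
      have "\<bar>t - t0\<bar>^k / fact k * norm (coef t0 k z) \<le> \<delta>^k / fact k * H k"
        using dk H(1)[of k] H(2)[OF z, of k] d by (intro mult_mono divide_right_mono) auto
      then show ?thesis using True nt by (simp add: M_def)
    next
      case False
      define j where "j = k - m"
      have k: "k = m + j" using False unfolding j_def by simp
      have c1: "norm (coef t0 k z) \<le> C * Jb t0 B j"
      proof -
        have "norm (coef t0 (m + j) z) \<le> norm (P m z * rGamma (of_nat m - z)) * Jb t0 B j"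
          by (rule coef_tail_bound[OF t0 zm[OF z] zR[OF z] B_def])
        also have "\<dots> \<le> C * Jb t0 B j" using C(2)[OF z] Jb_nonneg by (intro mult_right_mono) auto
        finally show ?thesis unfolding k .
      qed
      have c2: "\<delta>^k / fact k \<le> \<delta>^m * (\<delta>^j / fact j)"
      proof -
        have "fact j \<le> (fact k :: real)" unfolding k by (intro fact_mono) auto
        then have "\<delta>^k / fact k \<le> \<delta>^k / fact j" using d by (intro divide_left_mono) auto
        also have "\<dots> = \<delta>^m * (\<delta>^j / fact j)" unfolding k by (simp add: power_add)
        finally show ?thesis .
      qed
      have "\<bar>t - t0\<bar>^k / fact k * norm (coef t0 k z) \<le> \<delta>^k / fact k * (C * Jb t0 B j)"
        using dk c1 d by (intro mult_mono divide_right_mono) auto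
      also have "\<dots> \<le> \<delta>^m * (\<delta>^j / fact j) * (C * Jb t0 B j)"
        using c2 C Jb_nonneg by (intro mult_right_mono) auto
      also have "\<dots> = M k" using False by (simp add: M_def j_def mult.assoc mult.left_commute)
      finally show ?thesis using nt by simp
    qed
  qed
qed

end

lemma ps_deriv:
  fixes c :: "nat \<Rightarrow> complex" and g :: "real \<Rightarrow> complex"
  assumes d: "\<delta> > 0" and sm: "summable (\<lambda>k. norm (c k) * \<delta>^k)"
    and eq: "\<And>\<tau>. \<bar>\<tau> - t\<bar> < \<delta> \<Longrightarrow> g \<tau> = (\<Sum>k. c k * complex_of_real (\<tau> - t)^k)"
  shows "(g has_vector_derivative c 1) (at t)"
proof -
  define h where "h x = (\<Sum>k. c k * x^k)" for x :: complex
  have sK: "summable (\<lambda>n. c n * complex_of_real \<delta> ^ n)"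
  proof (rule summable_norm_cancel)
    show "summable (\<lambda>n. norm (c n * complex_of_real \<delta> ^ n))"
      using sm d by (simp add: norm_mult norm_power)
  qed
  have "(h has_field_derivative (\<Sum>n. diffs c n * 0^n)) (at 0)"
    unfolding h_def by (rule termdiffs_strong[OF sK]) (use d in simp)
  moreover have "(\<Sum>n. diffs c n * 0^n) = c 1" by (simp add: powser_zero diffs_def)
  ultimately have hd: "(h has_field_derivative c 1) (at 0)" by simp
  have ld: "((\<lambda>\<tau>. complex_of_real (\<tau> - t)) has_vector_derivative 1) (at t)"
  proof -
    have "((\<lambda>\<tau>. complex_of_real (\<tau> - t)) has_vector_derivative complex_of_real 1) (at t)"
      by (intro has_vector_derivative_of_real derivative_eq_intros) auto
    then show ?thesis by simp
  qed
  have "(h \<circ> (\<lambda>\<tau>. complex_of_real (\<tau> - t)) has_vector_derivative 1 * c 1) (at t)"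
    by (rule field_vector_diff_chain_at[OF ld]) (use hd in simp)
  then have d1: "(h \<circ> (\<lambda>\<tau>. complex_of_real (\<tau> - t)) has_vector_derivative c 1) (at t)" by simp
  show ?thesis
  proof (rule has_vector_derivative_transform_within_open[OF d1, of "ball t \<delta>"])
    show "open (ball t \<delta>)" by simp
    show "t \<in> ball t \<delta>" using d by simp
    fix y assume "y \<in> ball t \<delta>"
    then have "\<bar>y - t\<bar> < \<delta>" by (simp add: dist_real_def abs_minus_commute)
    then show "(h \<circ> (\<lambda>\<tau>. complex_of_real (\<tau> - t))) y = g y" using eq by (simp add: h_def)
  qed
qed

context Hs
begin

lemma partial_holo:
  assumes t0: "t0 > 0"
  shows "(\<lambda>w. \<Sum>i<n. complex_of_real ((t - t0)^i / fact i) * coef t0 i w) holomorphic_on Om"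
  using coef_holo[OF t0] by (intro holomorphic_on_sum holomorphic_on_mult holomorphic_on_const) auto

lemma Tser_holo:
  assumes t0: "t0 > 0" and tt: "\<bar>t - t0\<bar> < t0"
  shows "Tser t0 t holomorphic_on Om"
proof -
  have "Tser t0 t field_differentiable (at z)" if z: "z \<in> Om" for z
  proof -
    obtain r where r: "r > 0" "cball z r \<subseteq> Om" using open_Om z open_contains_cball by blast
    obtain M where M: "summable M" "\<And>k w \<tau>. w \<in> cball z r \<Longrightarrow> \<bar>\<tau> - t0\<bar> \<le> \<bar>t - t0\<bar> \<Longrightarrow>
        norm (complex_of_real ((\<tau> - t0)^k / fact k) * coef t0 k w) \<le> M k"
      using unif_bound[OF t0 compact_cball r(2), of "\<bar>t - t0\<bar>"] tt by auto
    have ul: "uniform_limit (cball z r) (\<lambda>n w. \<Sum>i<n. complex_of_real ((t - t0)^i / fact i) * coef t0 i w)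
       (\<lambda>w. \<Sum>i. complex_of_real ((t - t0)^i / fact i) * coef t0 i w) sequentially"
      by (rule Weierstrass_m_test) (use M in auto)
    then have ul': "uniform_limit (cball z r) (\<lambda>n w. \<Sum>i<n. complex_of_real ((t - t0)^i / fact i) * coef t0 i w)
       (Tser t0 t) sequentially"
      by (simp add: Tser_def[abs_def])
    have ev: "\<forall>\<^sub>F n in sequentially. continuous_on (cball z r) (\<lambda>w. \<Sum>i<n. complex_of_real ((t - t0)^i / fact i) * coef t0 i w)
       \<and> (\<lambda>w. \<Sum>i<n. complex_of_real ((t - t0)^i / fact i) * coef t0 i w) holomorphic_on ball z r"
    proof (intro always_eventually allI conjI)
      fix n
      have hp: "(\<lambda>w. \<Sum>i<n. complex_of_real ((t - t0)^i / fact i) * coef t0 i w) holomorphic_on cball z r"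
        using partial_holo[OF t0] r(2) by (rule holomorphic_on_subset)
      then show "continuous_on (cball z r) (\<lambda>w. \<Sum>i<n. complex_of_real ((t - t0)^i / fact i) * coef t0 i w)"
        by (rule holomorphic_on_imp_continuous_on)
      show "(\<lambda>w. \<Sum>i<n. complex_of_real ((t - t0)^i / fact i) * coef t0 i w) holomorphic_on ball z r"
        using hp ball_subset_cball by (rule holomorphic_on_subset)
    qed
    have tl: "\<not> trivial_limit (sequentially :: nat filter)" by simp
    have "Tser t0 t holomorphic_on ball z r"
      using holomorphic_uniform_limit[OF ev ul' tl] by blast
    then show ?thesis using r(1) by (intro holomorphic_on_imp_differentiable_at[of _ "ball z r"]) auto
  qed
  then show ?thesis unfolding holomorphic_on_def using field_differentiable_at_within by blast
qed

lemma f_series: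
  assumes z: "z \<in> Om" and t0: "t0 > 0" and tt: "\<bar>t - t0\<bar> < t0"
  shows "f z t = Tser t0 t z"
proof -
  have t: "t > 0" using tt by linarith
  show ?thesis
  proof (rule analytic_continuation_open[of "{z. Re z < -1}" Om "\<lambda>z. f z t" "Tser t0 t"])
    show "open {z. Re z < -1}" by (rule open_halfspace_Re_lt)
    show "open Om" by (rule open_Om)
    show "{z. Re z < -1} \<noteq> {}" by (auto intro: exI[of _ "-2"])
    show "connected Om" by (rule connected_Om)
    show "{z. Re z < -1} \<subseteq> Om" using Om_left by auto
    show "(\<lambda>z. f z t) holomorphic_on Om" using holf[OF t] Om_sub by (rule holomorphic_on_subset)
    show "Tser t0 t holomorphic_on Om" by (rule Tser_holo[OF t0 tt])
    show "z \<in> Om" by (rule z)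
    fix w assume "w \<in> {z. Re z < -1}"
    then have "Re (-w) \<ge> 1" by simp
    from series_left[OF this t0 tt] show "f w t = Tser t0 t w" by simp
  qed
qed

lemma P1: "P 1 z = z" by (simp add: P_def)

lemma f_deriv:
  assumes z: "z \<in> Om" and t: "t > 0"
  shows "((\<lambda>\<tau>. f z \<tau>) has_vector_derivative (z * f (z - 1) t)) (at t)"
proof -
  define \<delta> where "\<delta> = t / 2"
  have d: "\<delta> > 0" "\<delta> < t" using t unfolding \<delta>_def by auto
  obtain M where M: "summable M" "\<And>k w \<tau>. w \<in> {z} \<Longrightarrow> \<bar>\<tau> - t\<bar> \<le> \<delta> \<Longrightarrow>
        norm (complex_of_real ((\<tau> - t)^k / fact k) * coef t k w) \<le> M k"
    using unif_bound[OF t, of "{z}" \<delta>] z d by auto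
  define c where "c k = coef t k z / fact k" for k
  have "summable (\<lambda>k. norm (c k) * \<delta>^k)"
  proof (rule summable_comparison_test[OF _ M(1)])
    have "norm (norm (c k) * \<delta>^k) \<le> M k" for k
    proof -
      have "norm (complex_of_real (((t + \<delta>) - t)^k / fact k) * coef t k z) \<le> M k"
        using M(2)[of z "t + \<delta>" k] d by simp
      moreover have "norm (complex_of_real (((t + \<delta>) - t)^k / fact k) * coef t k z) = norm (norm (c k) * \<delta>^k)"
        using d by (simp add: c_def norm_mult norm_divide norm_power)
      ultimately show ?thesis by simp
    qed
    then show "\<exists>N. \<forall>n\<ge>N. norm (norm (c n) * \<delta>^n) \<le> M n" by blast
  qed
  moreover have "f z \<tau> = (\<Sum>k. c k * complex_of_real (\<tau> - t)^k)" if "\<bar>\<tau> - t\<bar> < \<delta>" for \<tau>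
  proof -
    have "f z \<tau> = Tser t \<tau> z" using f_series[OF z t] that d by simp
    also have "\<dots> = (\<Sum>k. c k * complex_of_real (\<tau> - t)^k)"
      unfolding Tser_def c_def by (simp add: field_simps)
    finally show ?thesis .
  qed
  ultimately have "((\<lambda>\<tau>. f z \<tau>) has_vector_derivative c 1) (at t)"
    by (intro ps_deriv[OF d(1)]) auto
  moreover have "c 1 = z * f (z - 1) t" using P1[of z] by (simp add: c_def coef_def)
  ultimately show ?thesis by simp
qed

end


lemma removable_ext:
  fixes h g :: "complex \<Rightarrow> complex"
  assumes h: "h holomorphic_on (ball z0 R - {z0})" and g: "g holomorphic_on ball z0 e"
    and e: "0 < e" "e \<le> R"
    and eq: "\<And>w. w \<in> ball z0 e - {z0} \<Longrightarrow> h w = g w"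
  shows "(\<lambda>w. if w = z0 then g z0 else h w) holomorphic_on ball z0 R"
    and "(h \<longlongrightarrow> g z0) (at z0)"
proof -
  define H where "H w = (if w = z0 then g z0 else h w)" for w
  have "H holomorphic_on ball z0 e"
    by (rule holomorphic_transform[OF g]) (use eq in \<open>auto simp: H_def\<close>)
  moreover have "H holomorphic_on (ball z0 R - {z0})"
    by (rule holomorphic_transform[OF h]) (auto simp: H_def)
  ultimately have "H holomorphic_on (ball z0 e \<union> (ball z0 R - {z0}))"
    by (intro holomorphic_on_Un) auto
  moreover have "ball z0 e \<union> (ball z0 R - {z0}) = ball z0 R" using e by auto
  ultimately show "(\<lambda>w. if w = z0 then g z0 else h w) holomorphic_on ball z0 R"
    unfolding H_def by simp
  have "isCont g z0"
    using g e by (intro continuous_on_interior[OF holomorphic_on_imp_continuous_on[OF g]]) auto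
  then have "(g \<longlongrightarrow> g z0) (at z0)" by (simp add: isCont_def)
  moreover have "eventually (\<lambda>w. g w = h w) (at z0)"
    unfolding eventually_at using e eq by (intro exI[of _ e]) (auto simp: dist_commute)
  ultimately show "(h \<longlongrightarrow> g z0) (at z0)" by (rule Lim_transform_eventually)
qed

lemma Lim_ext:
  fixes F g :: "complex \<Rightarrow> complex"
  assumes g: "g holomorphic_on ball z0 e" and e: "0 < e"
    and eq: "\<And>w. w \<in> ball z0 e - {z0} \<Longrightarrow> F w = g w"
  shows "Lim (at z0) F = g z0" and "(F \<longlongrightarrow> g z0) (at z0)"
proof -
  have "isCont g z0"
    using g e by (intro continuous_on_interior[OF holomorphic_on_imp_continuous_on[OF g]]) auto
  then have "(g \<longlongrightarrow> g z0) (at z0)" by (simp add: isCont_def)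
  moreover have "eventually (\<lambda>w. g w = F w) (at z0)"
    unfolding eventually_at using e eq by (intro exI[of _ e]) (auto simp: dist_commute)
  ultimately show F: "(F \<longlongrightarrow> g z0) (at z0)" by (rule Lim_transform_eventually)
  then show "Lim (at z0) F = g z0" by (intro tendsto_Lim) auto
qed

context Hs
begin

lemma reg_ext: "z0 \<in> Reg f \<Longrightarrow> t > 0 \<Longrightarrow> \<exists>e>0. \<exists>g. g holomorphic_on ball z0 e \<and> (\<forall>z\<in>ball z0 e - {z0}. f z t = g z)"
  unfolding Reg_def by blast

lemma Om_Reg: assumes "z \<in> Om" shows "z \<in> Reg f"
  unfolding Reg_def
proof (intro CollectI allI impI)
  fix t :: real assume t: "t > 0"
  obtain e where e: "e > 0" "ball z e \<subseteq> Om" using open_Om assms open_contains_ball by blast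
  have "(\<lambda>w. f w t) holomorphic_on ball z e"
    using holf[OF t] e(2) Om_sub by (meson holomorphic_on_subset order_trans)
  then show "\<exists>e>0. \<exists>g. g holomorphic_on ball z e \<and> (\<forall>w\<in>ball z e - {z}. f w t = g w)"
    using e(1) by blast
qed

lemma fR_Om: assumes "z \<in> Om" "t > 0" shows "fR f z t = f z t"
proof -
  obtain e where e: "e > 0" "ball z e \<subseteq> Om" using open_Om assms open_contains_ball by blast
  have "(\<lambda>w. f w t) holomorphic_on ball z e"
    using holf[OF assms(2)] e(2) Om_sub by (meson holomorphic_on_subset order_trans)
  then show ?thesis unfolding fR_def by (rule Lim_ext(1)[OF _ e(1)]) auto
qed

lemma ext_holo:
  assumes z0: "z0 \<in> Reg f" and R: "R > 0" "cball z0 R - {z0} \<subseteq> Om" and t: "t > 0"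
  shows "(\<lambda>w. if w = z0 then fR f z0 t else f w t) holomorphic_on ball z0 R"
proof -
  obtain e g where e: "e > 0" and g: "g holomorphic_on ball z0 e" and eq: "\<forall>z\<in>ball z0 e - {z0}. f z t = g z"
    using reg_ext[OF z0 t] by blast
  have fRg: "fR f z0 t = g z0" unfolding fR_def by (rule Lim_ext(1)[OF g e]) (use eq in auto)
  have hh: "(\<lambda>w. f w t) holomorphic_on (ball z0 R - {z0})"
  proof (rule holomorphic_on_subset[OF holf[OF t]])
    have "ball z0 R - {z0} \<subseteq> cball z0 R - {z0}" by auto
    also have "\<dots> \<subseteq> Om" by (rule R(2))
    also have "\<dots> \<subseteq> - S" by (rule Om_sub)
    finally show "ball z0 R - {z0} \<subseteq> - S" .
  qed
  have g': "g holomorphic_on ball z0 (min e R)" using g by (rule holomorphic_on_subset) auto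
  have "(\<lambda>w. if w = z0 then g z0 else f w t) holomorphic_on ball z0 R"
    by (rule removable_ext(1)[OF hh g']) (use e R eq in auto)
  then show ?thesis unfolding fRg .
qed

lemma cint_center:
  assumes z0: "z0 \<in> Reg f" and R: "R > 0" "cball z0 R - {z0} \<subseteq> Om" and t: "t > 0"
    and rho: "0 < \<rho>" "\<rho> < R"
  shows "((\<lambda>u. f u t / (u - z0)) has_contour_integral (2 * of_real pi * \<i> * fR f z0 t)) (circlepath z0 \<rho>)"
proof -
  define H where "H w = (if w = z0 then fR f z0 t else f w t)" for w
  have hH: "H holomorphic_on ball z0 R" unfolding H_def by (rule ext_holo[OF z0 R t])
  have "((\<lambda>u. H u / (u - z0)) has_contour_integral (2 * of_real pi * \<i> * H z0)) (circlepath z0 \<rho>)"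
  proof (rule Cauchy_integral_circlepath)
    show "continuous_on (cball z0 \<rho>) H"
      by (rule continuous_on_subset[OF holomorphic_on_imp_continuous_on[OF hH]]) (use rho in \<open>auto simp: subset_eq\<close>)
    show "H holomorphic_on ball z0 \<rho>" by (rule holomorphic_on_subset[OF hH]) (use rho in auto)
    show "norm (z0 - z0) < \<rho>" using rho by simp
  qed
  moreover have "H z0 = fR f z0 t" by (simp add: H_def)
  ultimately have "((\<lambda>u. H u / (u - z0)) has_contour_integral (2 * of_real pi * \<i> * fR f z0 t)) (circlepath z0 \<rho>)"
    by simp
  then show ?thesis
  proof (rule has_contour_integral_eq)
    fix x assume "x \<in> path_image (circlepath z0 \<rho>)"
    then have "x \<noteq> z0" using rho by (auto simp: path_image_circlepath)
    then show "H x / (x - z0) = f x t / (x - z0)" by (simp add: H_def)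
  qed
qed

lemma reg_shift:
  assumes z0: "z0 \<in> Reg f" shows "z0 - 1 \<in> Reg f"
proof (cases "z0 = 0")
  case True
  then show ?thesis using Om_Reg[OF Om_left[of "-1"]] by simp
next
  case False
  obtain R where R: "R > 0" "cball z0 R - {z0} \<subseteq> Om" by (rule punctured_Om)
  show ?thesis
    unfolding Reg_def
  proof (intro CollectI allI impI)
    fix t :: real assume t: "t > 0"
    have "z0 \<in> Reg (pdt f)" using RegP z0 by blast
    then obtain e2 g2 where e2: "e2 > 0" and g2: "g2 holomorphic_on ball z0 e2"
      and eq2: "\<forall>z\<in>ball z0 e2 - {z0}. pdt f z t = g2 z"
      unfolding Reg_def using t by blast
    define e where "e = min (min e2 R) (norm z0)"
    have e: "e > 0" using e2 R False unfolding e_def by auto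
    define g where "g w = g2 (w + 1) / (w + 1)" for w
    have "g holomorphic_on ball (z0 - 1) e"
    proof -
      have "(\<lambda>w. g2 (w + 1)) holomorphic_on ball (z0 - 1) e"
      proof -
        have "g2 \<circ> (\<lambda>w. w + 1) holomorphic_on ball (z0 - 1) e"
        proof (rule holomorphic_on_compose_gen[OF _ g2])
          show "(\<lambda>w. w + 1) holomorphic_on ball (z0 - 1) e" by (intro holomorphic_intros)
          show "(\<lambda>w. w + 1) ` ball (z0 - 1) e \<subseteq> ball z0 e2"
            unfolding e_def by (auto simp: dist_norm algebra_simps)
        qed
        then show ?thesis by (simp add: o_def)
      qed
      moreover have "w + 1 \<noteq> 0" if "w \<in> ball (z0 - 1) e" for w
      proof
        assume "w + 1 = 0"
        then have "dist (z0 - 1) w = norm z0" by (simp add: dist_norm algebra_simps)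
        then show False using that unfolding e_def by auto
      qed
      ultimately show ?thesis unfolding g_def by (intro holomorphic_intros) auto
    qed
    moreover have "\<forall>w\<in>ball (z0 - 1) e - {z0 - 1}. f w t = g w"
    proof
      fix w assume w: "w \<in> ball (z0 - 1) e - {z0 - 1}"
      define u where "u = w + 1"
      have u: "u \<in> ball z0 e - {z0}" using w unfolding u_def by (auto simp: dist_norm algebra_simps)
      then have uOm: "u \<in> Om" using R unfolding e_def by auto
      have "pdt f u t = u * f (u - 1) t"
        unfolding pdt_def by (rule vector_derivative_at[OF f_deriv[OF uOm t]])
      moreover have "pdt f u t = g2 u" using eq2 u unfolding e_def by auto
      moreover have "u \<noteq> 0"
      proof
        assume "u = 0"
        then show False using u unfolding e_def by (auto simp: dist_norm)
      qed
      ultimately show "f w t = g w" unfolding g_def u_def[symmetric] by (simp add: u_def field_simps)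
    qed
    ultimately show "\<exists>e>0. \<exists>g. g holomorphic_on ball (z0 - 1) e \<and> (\<forall>w\<in>ball (z0 - 1) e - {z0 - 1}. f w t = g w)"
      using e by blast
  qed
qed

end

context Hs
begin

lemma sphere_Om: "R > 0 \<Longrightarrow> cball z0 R - {z0} \<subseteq> Om \<Longrightarrow> 0 < \<rho> \<Longrightarrow> \<rho> < R \<Longrightarrow> sphere z0 \<rho> \<subseteq> Om"
  by (auto simp: subset_eq)

lemma fR_series_deriv:
  assumes z0: "z0 \<in> Reg f" and R: "R > 0" "cball z0 R - {z0} \<subseteq> Om" and t1: "t1 > 0"
    and rho: "0 < \<rho>" "\<rho> < R"
  shows "((\<lambda>\<tau>. fR f z0 \<tau>) has_vector_derivative
          (contour_integral (circlepath z0 \<rho>) (\<lambda>u. coef t1 1 u / (u - z0)) / (2 * of_real pi * \<i>))) (at t1)"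
proof -
  define \<delta> where "\<delta> = t1 / 2"
  have d: "0 < \<delta>" "\<delta> < t1" using t1 unfolding \<delta>_def by auto
  have Ksub: "sphere z0 \<rho> \<subseteq> Om" by (rule sphere_Om[OF R rho])
  obtain M where M: "summable M" "\<And>k z t. z \<in> sphere z0 \<rho> \<Longrightarrow> \<bar>t - t1\<bar> \<le> \<delta> \<Longrightarrow>
        norm (complex_of_real ((t - t1)^k / fact k) * coef t1 k z) \<le> M k"
    using unif_bound[OF t1 compact_sphere Ksub, of \<delta>] d by auto
  have pi_img: "path_image (circlepath z0 \<rho>) = sphere z0 \<rho>"
    using rho by (simp add: path_image_circlepath_nonneg)
  have Mnn: "M k \<ge> 0" for k
  proof -
    have "z0 + of_real \<rho> \<in> sphere z0 \<rho>" using rho by (simp add: dist_norm)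
    from M(2)[OF this, of t1 k] d have "norm (complex_of_real ((t1 - t1)^k / fact k) * coef t1 k (z0 + of_real \<rho>)) \<le> M k"
      by simp
    then show ?thesis using norm_ge_zero order_trans by blast
  qed
  define A where "A k = contour_integral (circlepath z0 \<rho>) (\<lambda>u. coef t1 k u / (u - z0))" for k
  define c where "c k = A k / (2 * of_real pi * \<i> * fact k)" for k
  have cont_k: "continuous_on (sphere z0 \<rho>) (\<lambda>u. coef t1 k u / (u - z0))" for k
  proof (rule continuous_on_divide)
    show "continuous_on (sphere z0 \<rho>) (coef t1 k)" using coef_cont[OF t1] Ksub by (rule continuous_on_subset)
    show "continuous_on (sphere z0 \<rho>) (\<lambda>u. u - z0)" by (intro continuous_intros)
    show "\<forall>u\<in>sphere z0 \<rho>. u - z0 \<noteq> 0" using rho by auto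
  qed
  have int_k: "(\<lambda>u. coef t1 k u / (u - z0)) contour_integrable_on circlepath z0 \<rho>" for k
    by (rule contour_integrable_continuous_circlepath) (use cont_k pi_img in simp)
  have Abound: "norm (complex_of_real (\<delta>^k / fact k) * A k) \<le> 2 * pi * M k" for k
  proof -
    have "((\<lambda>u. complex_of_real (\<delta>^k / fact k) * (coef t1 k u / (u - z0))) has_contour_integral
        (complex_of_real (\<delta>^k / fact k) * A k)) (circlepath z0 \<rho>)"
      unfolding A_def by (intro has_contour_integral_lmul has_contour_integral_integral int_k)
    then have "norm (complex_of_real (\<delta>^k / fact k) * A k) \<le> (M k / \<rho>) * (2 * pi * \<rho>)"
    proof (rule has_contour_integral_bound_circlepath)
      show "0 \<le> M k / \<rho>" using Mnn rho by simp
      show "0 < \<rho>" by (rule rho)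
      fix u assume u: "norm (u - z0) = \<rho>"
      then have us: "u \<in> sphere z0 \<rho>" by (simp add: dist_norm norm_minus_commute)
      have "norm (complex_of_real (\<delta>^k / fact k) * (coef t1 k u / (u - z0)))
          = norm (complex_of_real (((t1 + \<delta>) - t1)^k / fact k) * coef t1 k u) / \<rho>"
        using u by (simp add: norm_mult norm_divide)
      also have "\<dots> \<le> M k / \<rho>" using M(2)[OF us, of "t1 + \<delta>" k] d rho by (intro divide_right_mono) auto
      finally show "norm (complex_of_real (\<delta>^k / fact k) * (coef t1 k u / (u - z0))) \<le> M k / \<rho>" .
    qed
    then show ?thesis using rho by (simp add: mult.commute)
  qed
  have csum: "summable (\<lambda>k. norm (c k) * \<delta>^k)"
  proof (rule summable_comparison_test[OF _ M(1)])
    have "norm (norm (c k) * \<delta>^k) \<le> M k" for k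
    proof -
      have "norm (norm (c k) * \<delta>^k) = norm (complex_of_real (\<delta>^k / fact k) * A k) / (2 * pi)"
        using d by (simp add: c_def norm_mult norm_divide abs_mult norm_power mult.commute)
      also have "\<dots> \<le> M k" using Abound[of k] by (simp add: divide_le_eq mult.commute)
      finally show ?thesis .
    qed
    then show "\<exists>N. \<forall>n\<ge>N. norm (norm (c n) * \<delta>^n) \<le> M n" by blast
  qed
  have expand: "fR f z0 \<tau> = (\<Sum>k. c k * complex_of_real (\<tau> - t1)^k)" if tau: "\<bar>\<tau> - t1\<bar> < \<delta>" for \<tau>
  proof -
    have tau0: "\<tau> > 0" using tau d by linarith
    define trm where "trm k u = complex_of_real ((\<tau> - t1)^k / fact k) * (coef t1 k u / (u - z0))" for k u
    have tb: "norm (trm k u) \<le> M k / \<rho>" if u: "u \<in> sphere z0 \<rho>" for k u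
    proof -
      have "norm (trm k u) = norm (complex_of_real ((\<tau> - t1)^k / fact k) * coef t1 k u) / \<rho>"
        using u by (simp add: trm_def norm_mult norm_divide dist_norm norm_minus_commute)
      also have "\<dots> \<le> M k / \<rho>" using M(2)[OF u, of \<tau> k] tau rho by (intro divide_right_mono) auto
      finally show ?thesis .
    qed
    have ul: "uniform_limit (sphere z0 \<rho>) (\<lambda>n u. \<Sum>k<n. trm k u) (\<lambda>u. \<Sum>k. trm k u) sequentially"
      by (rule Weierstrass_m_test[OF tb]) (use M(1) in \<open>auto intro: summable_divide\<close>)
    have ev: "\<forall>\<^sub>F n in sequentially. (\<lambda>u. \<Sum>k<n. trm k u) contour_integrable_on circlepath z0 \<rho>"
    proof (intro always_eventually allI)
      fix n
      show "(\<lambda>u. \<Sum>k<n. trm k u) contour_integrable_on circlepath z0 \<rho>"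
        unfolding trm_def
        by (intro contour_integrable_sum contour_integrable_lmul int_k) auto
    qed
    have lim: "(\<lambda>n. contour_integral (circlepath z0 \<rho>) (\<lambda>u. \<Sum>k<n. trm k u))
        \<longlonglongrightarrow> contour_integral (circlepath z0 \<rho>) (\<lambda>u. \<Sum>k. trm k u)"
      by (rule contour_integral_uniform_limit_circlepath(2)[OF ev ul]) (use rho in auto)
    have pint: "contour_integral (circlepath z0 \<rho>) (\<lambda>u. \<Sum>k<n. trm k u)
        = (\<Sum>k<n. complex_of_real ((\<tau> - t1)^k / fact k) * A k)" for n
    proof -
      have "contour_integral (circlepath z0 \<rho>) (\<lambda>u. \<Sum>k<n. trm k u)
          = (\<Sum>k<n. contour_integral (circlepath z0 \<rho>) (trm k))"
        unfolding trm_def by (intro contour_integral_sum contour_integrable_lmul int_k) auto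
      also have "\<dots> = (\<Sum>k<n. complex_of_real ((\<tau> - t1)^k / fact k) * A k)"
        unfolding trm_def A_def by (intro sum.cong refl contour_integral_lmul int_k)
      finally show ?thesis .
    qed
    have "(\<lambda>k. complex_of_real ((\<tau> - t1)^k / fact k) * A k) sums
        contour_integral (circlepath z0 \<rho>) (\<lambda>u. \<Sum>k. trm k u)"
      using lim unfolding sums_def pint .
    moreover have "contour_integral (circlepath z0 \<rho>) (\<lambda>u. \<Sum>k. trm k u)
        = contour_integral (circlepath z0 \<rho>) (\<lambda>u. f u \<tau> / (u - z0))"
    proof (rule contour_integral_eq)
      fix u assume "u \<in> path_image (circlepath z0 \<rho>)"
      then have u: "u \<in> sphere z0 \<rho>" unfolding pi_img .
      then have uOm: "u \<in> Om" using Ksub by auto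
      have "summable (\<lambda>k. complex_of_real ((\<tau> - t1)^k / fact k) * coef t1 k u)"
        by (rule summable_comparison_test[OF _ M(1)]) (use M(2)[OF u] tau in auto)
      then have "(\<lambda>k. complex_of_real ((\<tau> - t1)^k / fact k) * coef t1 k u) sums Tser t1 \<tau> u"
        unfolding Tser_def by (rule summable_sums)
      then have "(\<lambda>k. complex_of_real ((\<tau> - t1)^k / fact k) * coef t1 k u / (u - z0)) sums (Tser t1 \<tau> u / (u - z0))"
        by (rule sums_divide)
      then have "(\<lambda>k. trm k u) sums (f u \<tau> / (u - z0))"
        unfolding trm_def f_series[OF uOm t1, of \<tau>, symmetric, OF order.strict_trans[OF tau d(2)]]
        by (simp add: times_divide_eq_right)
      then show "(\<Sum>k. trm k u) = f u \<tau> / (u - z0)" by (simp add: sums_iff)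
    qed
    moreover have "contour_integral (circlepath z0 \<rho>) (\<lambda>u. f u \<tau> / (u - z0)) = 2 * of_real pi * \<i> * fR f z0 \<tau>"
      by (rule contour_integral_unique[OF cint_center[OF z0 R tau0 rho]])
    ultimately have "(\<lambda>k. complex_of_real ((\<tau> - t1)^k / fact k) * A k) sums (2 * of_real pi * \<i> * fR f z0 \<tau>)"
      by simp
    then have S2: "(\<lambda>k. complex_of_real ((\<tau> - t1)^k / fact k) * A k / (2 * of_real pi * \<i>)) sums
        (2 * of_real pi * \<i> * fR f z0 \<tau> / (2 * of_real pi * \<i>))"
      by (rule sums_divide)
    have "2 * of_real pi * \<i> * fR f z0 \<tau> / (2 * of_real pi * \<i>) = fR f z0 \<tau>" by simp
    with S2 have "(\<lambda>k. complex_of_real ((\<tau> - t1)^k / fact k) * A k / (2 * of_real pi * \<i>)) sums fR f z0 \<tau>"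
      by (simp only:)
    moreover have "complex_of_real ((\<tau> - t1)^k / fact k) * A k / (2 * of_real pi * \<i>) = c k * complex_of_real (\<tau> - t1)^k" for k
      by (simp add: c_def field_simps)
    ultimately show ?thesis by (simp add: sums_iff)
  qed
  have "((\<lambda>\<tau>. fR f z0 \<tau>) has_vector_derivative c 1) (at t1)"
    by (rule ps_deriv[OF d(1) csum expand])
  then show ?thesis by (simp add: c_def A_def)
qed

end


context Hs
begin

lemma fR_deriv:
  assumes z0: "z0 \<in> Reg f" and t1: "t1 > 0"
  shows "((\<lambda>\<tau>. fR f z0 \<tau>) has_vector_derivative (z0 * fR f (z0 - 1) t1)) (at t1)"
proof -
  obtain R where R: "R > 0" "cball z0 R - {z0} \<subseteq> Om" by (rule punctured_Om)
  define \<rho> where "\<rho> = R / 2"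
  have rho: "0 < \<rho>" "\<rho> < R" using R unfolding \<rho>_def by auto
  note D = fR_series_deriv[OF z0 R t1 rho]
  define G where "G u = u * f (u - 1) t1" for u
  have coefG: "coef t1 1 u = G u" for u using P1[of u] by (simp add: coef_def G_def)
  have "z0 \<in> Reg (pdt f)" using RegP z0 by blast
  then obtain e2 g2 where e2: "e2 > 0" and g2: "g2 holomorphic_on ball z0 e2"
    and eq2: "\<forall>z\<in>ball z0 e2 - {z0}. pdt f z t1 = g2 z"
    unfolding Reg_def using t1 by blast
  define e where "e = min e2 R"
  have e: "0 < e" "e \<le> R" using e2 R unfolding e_def by auto
  have puncOm: "ball z0 R - {z0} \<subseteq> Om"
  proof -
    have "ball z0 R - {z0} \<subseteq> cball z0 R - {z0}" by auto
    then show ?thesis using R(2) by (rule order_trans)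
  qed
  have Gholo: "G holomorphic_on (ball z0 R - {z0})"
  proof -
    have "(\<lambda>u. f u t1) \<circ> (\<lambda>u. u - 1) holomorphic_on (ball z0 R - {z0})"
    proof (rule holomorphic_on_compose_gen[OF _ holf[OF t1]])
      show "(\<lambda>u. u - 1) holomorphic_on (ball z0 R - {z0})" by (intro holomorphic_intros)
      show "(\<lambda>u. u - 1) ` (ball z0 R - {z0}) \<subseteq> - S"
      proof
        fix x assume "x \<in> (\<lambda>u. u - 1) ` (ball z0 R - {z0})"
        then obtain u where u: "u \<in> ball z0 R - {z0}" "x = u - 1" by blast
        then have "u - of_nat 1 \<in> Om" using puncOm Om_shift[of u 1] by auto
        then show "x \<in> - S" using u Om_sub by auto
      qed
    qed
    then show ?thesis unfolding G_def by (intro holomorphic_intros) (simp add: o_def)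
  qed
  have g2': "g2 holomorphic_on ball z0 e" using g2 by (rule holomorphic_on_subset) (auto simp: e_def)
  have eqG: "G w = g2 w" if w: "w \<in> ball z0 e - {z0}" for w
  proof -
    have wOm: "w \<in> Om" using w puncOm e by auto
    have "pdt f w t1 = w * f (w - 1) t1"
      unfolding pdt_def by (rule vector_derivative_at[OF f_deriv[OF wOm t1]])
    moreover have "pdt f w t1 = g2 w" using eq2 w unfolding e_def by auto
    ultimately show ?thesis unfolding G_def by simp
  qed
  have GR: "(\<lambda>w. if w = z0 then g2 z0 else G w) holomorphic_on ball z0 R"
    by (rule removable_ext(1)[OF Gholo g2' e eqG])
  have Glim: "(G \<longlongrightarrow> g2 z0) (at z0)"
    by (rule removable_ext(2)[OF Gholo g2' e eqG])
  define H where "H w = (if w = z0 then g2 z0 else G w)" for w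
  have "((\<lambda>u. H u / (u - z0)) has_contour_integral (2 * of_real pi * \<i> * H z0)) (circlepath z0 \<rho>)"
  proof (rule Cauchy_integral_circlepath)
    show "continuous_on (cball z0 \<rho>) H" unfolding H_def
      by (rule continuous_on_subset[OF holomorphic_on_imp_continuous_on[OF GR]]) (use rho in \<open>auto simp: subset_eq\<close>)
    show "H holomorphic_on ball z0 \<rho>" unfolding H_def by (rule holomorphic_on_subset[OF GR]) (use rho in auto)
    show "norm (z0 - z0) < \<rho>" using rho by simp
  qed
  moreover have "H z0 = g2 z0" by (simp add: H_def)
  ultimately have "((\<lambda>u. H u / (u - z0)) has_contour_integral (2 * of_real pi * \<i> * g2 z0)) (circlepath z0 \<rho>)"
    by simp
  then have "((\<lambda>u. coef t1 1 u / (u - z0)) has_contour_integral (2 * of_real pi * \<i> * g2 z0)) (circlepath z0 \<rho>)"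
  proof (rule has_contour_integral_eq)
    fix x assume "x \<in> path_image (circlepath z0 \<rho>)"
    then have "x \<noteq> z0" using rho by (auto simp: path_image_circlepath)
    then show "H x / (x - z0) = coef t1 1 x / (x - z0)" unfolding coefG H_def by simp
  qed
  then have "contour_integral (circlepath z0 \<rho>) (\<lambda>u. coef t1 1 u / (u - z0)) / (2 * of_real pi * \<i>) = g2 z0"
    by (simp add: contour_integral_unique)
  with D have Dg: "((\<lambda>\<tau>. fR f z0 \<tau>) has_vector_derivative g2 z0) (at t1)" by simp
  have "g2 z0 = z0 * fR f (z0 - 1) t1"
  proof (cases "z0 = 0")
    case True
    have m1: "-1 \<in> Om" using Om_left[of "-1"] by simp
    have c: "continuous_on Om (\<lambda>w. f w t1)"
      by (rule holomorphic_on_imp_continuous_on, rule holomorphic_on_subset[OF holf[OF t1] Om_sub])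
    then have "\<forall>x\<in>Om. isCont (\<lambda>w. f w t1) x" by (simp add: continuous_on_eq_continuous_at[OF open_Om])
    then have cm1: "isCont (\<lambda>w. f w t1) (-1)" using m1 by blast
    have "isCont (\<lambda>u. f (u - 1) t1) 0"
    proof (rule isCont_o2[where f = "\<lambda>u. u - 1" and g = "\<lambda>w. f w t1"])
      show "isCont (\<lambda>u. u - 1) (0::complex)" by (intro continuous_intros)
      show "isCont (\<lambda>w. f w t1) ((\<lambda>u. u - 1) (0::complex))" using cm1 by simp
    qed
    then have "isCont G 0" unfolding G_def by (intro continuous_intros)
    then have "(G \<longlongrightarrow> G 0) (at 0)" by (simp add: isCont_def)
    then have "(G \<longlongrightarrow> 0) (at 0)" by (simp add: G_def)
    moreover have "(G \<longlongrightarrow> g2 0) (at 0)" using Glim True by simp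
    ultimately have "g2 0 = 0" by (intro tendsto_unique[of "at (0::complex)"]) auto
    then show ?thesis using True by simp
  next
    case False
    have "((\<lambda>u. G u / u) \<longlongrightarrow> g2 z0 / z0) (at z0)"
      by (intro tendsto_divide Glim tendsto_ident_at False)
    moreover have "eventually (\<lambda>u. G u / u = f (u - 1) t1) (at z0)"
    proof -
      have "eventually (\<lambda>u. u \<noteq> 0) (at z0)" using False by (intro tendsto_imp_eventually_ne[OF tendsto_ident_at])
      then show ?thesis by eventually_elim (simp add: G_def)
    qed
    ultimately have "((\<lambda>u. f (u - 1) t1) \<longlongrightarrow> g2 z0 / z0) (at z0)" by (rule Lim_transform_eventually)
    then have "((\<lambda>w. f ((w + 1) - 1) t1) \<longlongrightarrow> g2 z0 / z0) (at (z0 - 1))"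
      by (rule LIM_offset)
    then have "((\<lambda>w. f w t1) \<longlongrightarrow> g2 z0 / z0) (at (z0 - 1))" by simp
    then have "fR f (z0 - 1) t1 = g2 z0 / z0" unfolding fR_def by (intro tendsto_Lim) auto
    then show ?thesis using False by simp
  qed
  with Dg show ?thesis by simp
qed

end


fun Jint :: "real list \<Rightarrow> (real \<Rightarrow> complex) \<Rightarrow> real \<Rightarrow> complex" where
  "Jint [] g t = g t"
| "Jint (h # L) g t = Jint L (\<lambda>\<tau>. integral {0..h} (\<lambda>v. g (\<tau> + v))) t"

lemma Jint_shift: "Jint L g (t + c) = Jint L (\<lambda>\<tau>. g (\<tau> + c)) t"
proof (induction L arbitrary: g)
  case Nil then show ?case by simp
next
  case (Cons h L)
  have "Jint (h # L) g (t + c) = Jint L (\<lambda>\<tau>. integral {0..h} (\<lambda>v. g (\<tau> + c + v))) t"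
    using Cons.IH[of "\<lambda>\<tau>. integral {0..h} (\<lambda>v. g (\<tau> + v))"] by simp
  also have "\<dots> = Jint (h # L) (\<lambda>\<tau>. g (\<tau> + c)) t"
    by (simp add: add.commute add.left_commute)
  finally show ?case .
qed

lemma Jint_cong:
  assumes "\<And>\<tau>. \<tau> \<ge> t0 \<Longrightarrow> g1 \<tau> = g2 \<tau>" "\<forall>x\<in>set L. x \<ge> 0" "t \<ge> t0"
  shows "Jint L g1 t = Jint L g2 t"
  using assms
proof (induction L arbitrary: g1 g2 t)
  case Nil then show ?case by simp
next
  case (Cons h L)
  have "integral {0..h} (\<lambda>v. g1 (\<tau> + v)) = integral {0..h} (\<lambda>v. g2 (\<tau> + v))" if "\<tau> \<ge> t0" for \<tau>
  proof (rule integral_cong)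
    fix v assume "v \<in> {0..h}"
    then have "\<tau> + v \<ge> t0" using that by simp
    then show "g1 (\<tau> + v) = g2 (\<tau> + v)" by (rule Cons.prems(1))
  qed
  then have "Jint L (\<lambda>\<tau>. integral {0..h} (\<lambda>v. g1 (\<tau> + v))) t = Jint L (\<lambda>\<tau>. integral {0..h} (\<lambda>v. g2 (\<tau> + v))) t"
    by (rule Cons.IH) (use Cons.prems in simp_all)
  then show ?case by (simp only: Jint.simps)
qed

lemma inner_cont:
  fixes g :: "real \<Rightarrow> complex" and t0 h :: real
  assumes "continuous_on {t0..} g" "h \<ge> 0"
  shows "continuous_on {t0..} (\<lambda>\<tau>. integral {0..h} (\<lambda>v. g (\<tau> + v)))"
proof -
  have "continuous_on ({t0..} \<times> {0..h}) (\<lambda>(\<tau>, v). g (\<tau> + v))"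
  proof -
    have "continuous_on ({t0..} \<times> {0..h}) (\<lambda>p. fst p + snd p)" by (intro continuous_intros)
    moreover have "(\<lambda>p. fst p + snd p) ` ({t0..} \<times> {0..h}) \<subseteq> {t0..}" by auto
    ultimately have "continuous_on ({t0..} \<times> {0..h}) (g \<circ> (\<lambda>p. fst p + snd p))"
      using assms(1) by (intro continuous_on_compose) (auto intro: continuous_on_subset)
    then show ?thesis by (simp add: o_def case_prod_beta)
  qed
  then have "continuous_on ({t0..} \<times> cbox 0 h) (\<lambda>(\<tau>, v). g (\<tau> + v))" by (simp only: cbox_interval)
  then have "continuous_on {t0..} (\<lambda>\<tau>. integral (cbox 0 h) (\<lambda>v. g (\<tau> + v)))"
    by (rule integral_continuous_on_param)
  then show ?thesis by simp
qed

lemma Jint_linear: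
  assumes "continuous_on {t0..} g1" "continuous_on {t0..} g2" "\<forall>x\<in>set L. x \<ge> 0" "t \<ge> t0"
  shows "Jint L (\<lambda>\<tau>. a * g1 \<tau> + b * g2 \<tau>) t = a * Jint L g1 t + b * Jint L g2 t"
  using assms
proof (induction L arbitrary: g1 g2 t)
  case Nil then show ?case by simp
next
  case (Cons h L)
  define I1 where "I1 \<tau> = integral {0..h} (\<lambda>v. g1 (\<tau> + v))" for \<tau>
  define I2 where "I2 \<tau> = integral {0..h} (\<lambda>v. g2 (\<tau> + v))" for \<tau>
  have h: "h \<ge> 0" using Cons.prems by simp
  have c1: "continuous_on {t0..} I1" unfolding I1_def by (rule inner_cont[OF Cons.prems(1) h])
  have c2: "continuous_on {t0..} I2" unfolding I2_def by (rule inner_cont[OF Cons.prems(2) h])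
  have eq: "integral {0..h} (\<lambda>v. a * g1 (\<tau> + v) + b * g2 (\<tau> + v)) = a * I1 \<tau> + b * I2 \<tau>"
    if "\<tau> \<ge> t0" for \<tau>
  proof -
    have ci: "continuous_on {0..h} (\<lambda>v. g (\<tau> + v))" if "continuous_on {t0..} g" for g
    proof -
      have "continuous_on {0..h} (\<lambda>v. \<tau> + v)" by (intro continuous_intros)
      moreover have "(\<lambda>v. \<tau> + v) ` {0..h} \<subseteq> {t0..}" using \<open>\<tau> \<ge> t0\<close> by auto
      ultimately show ?thesis using that continuous_on_compose2 by blast
    qed
    have i1: "(\<lambda>v. g1 (\<tau> + v)) integrable_on {0..h}" by (rule integrable_continuous_interval[OF ci[OF Cons.prems(1)]])
    have i2: "(\<lambda>v. g2 (\<tau> + v)) integrable_on {0..h}" by (rule integrable_continuous_interval[OF ci[OF Cons.prems(2)]])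
    have "integral {0..h} (\<lambda>v. a * g1 (\<tau> + v) + b * g2 (\<tau> + v))
        = integral {0..h} (\<lambda>v. a * g1 (\<tau> + v)) + integral {0..h} (\<lambda>v. b * g2 (\<tau> + v))"
      by (rule integral_add) (intro integrable_on_mult_right i1, intro integrable_on_mult_right i2)
    then show ?thesis unfolding I1_def I2_def by (simp only: integral_mult_right)
  qed
  have "Jint L (\<lambda>\<tau>. integral {0..h} (\<lambda>v. a * g1 (\<tau> + v) + b * g2 (\<tau> + v))) t = Jint L (\<lambda>\<tau>. a * I1 \<tau> + b * I2 \<tau>) t"
    by (rule Jint_cong[of t0]) (use eq Cons.prems in auto)
  then have "Jint (h # L) (\<lambda>\<tau>. a * g1 \<tau> + b * g2 \<tau>) t = Jint L (\<lambda>\<tau>. a * I1 \<tau> + b * I2 \<tau>) t"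
    by (simp only: Jint.simps)
  also have "\<dots> = a * Jint L I1 t + b * Jint L I2 t"
    by (rule Cons.IH[OF c1 c2]) (use Cons.prems in auto)
  finally show ?case by (simp only: I1_def[abs_def] I2_def[abs_def] Jint.simps)
qed

lemma ftc_shift:
  fixes gA gB :: "real \<Rightarrow> complex"
  assumes D: "\<And>\<tau>. \<tau> > 0 \<Longrightarrow> (gA has_vector_derivative c * gB \<tau>) (at \<tau>)"
    and cB: "continuous_on {0<..} gB" and t: "t > 0" and h: "h \<ge> 0"
  shows "gA (t + h) - gA t = c * integral {0..h} (\<lambda>v. gB (t + v))"
proof -
  have "((\<lambda>v. c * gB (t + v)) has_integral (gA (t + h) - gA (t + 0))) {0..h}"
  proof (rule fundamental_theorem_of_calculus[OF h])
    fix x assume x: "x \<in> {0..h}"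
    have "(gA has_vector_derivative c * gB (t + x)) (at (t + x))" using D x t by auto
    then have "((\<lambda>v. gA (t + v)) has_vector_derivative c * gB (t + x)) (at x)"
    proof -
      assume d: "(gA has_vector_derivative c * gB (t + x)) (at (t + x))"
      have "((\<lambda>v. t + v) has_vector_derivative 1) (at x)"
        by (auto intro!: derivative_eq_intros)
      from vector_diff_chain_within[OF this[unfolded has_vector_derivative_def, folded has_vector_derivative_def]
          d[THEN has_vector_derivative_at_within, of "(\<lambda>v. t + v) ` UNIV"]]
      show ?thesis by (simp add: o_def)
    qed
    then show "((\<lambda>v. gA (t + v)) has_vector_derivative c * gB (t + x)) (at x within {0..h})"
      by (rule has_vector_derivative_at_within)
  qed
  then have "integral {0..h} (\<lambda>v. c * gB (t + v)) = gA (t + h) - gA (t + 0)"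
    by (rule integral_unique)
  then show ?thesis unfolding integral_mult_right by simp
qed

lemma negdiff_step:
  fixes gA gB :: "real \<Rightarrow> complex"
  assumes D: "\<And>\<tau>. \<tau> > 0 \<Longrightarrow> (gA has_vector_derivative c * gB \<tau>) (at \<tau>)"
    and cA: "continuous_on {0<..} gA" and cB: "continuous_on {0<..} gB"
    and L: "\<forall>x\<in>set L. x \<ge> 0" and t: "t > 0" and h: "h > 0"
  shows "negdiff h (Jint L gA) t = (- c) * Jint (h # L) gB t"
proof -
  have cA': "continuous_on {t..} gA" by (rule continuous_on_subset[OF cA]) (use t in auto)
  have cAh: "continuous_on {t..} (\<lambda>\<tau>. gA (\<tau> + h))"
  proof -
    have "continuous_on {t..} (\<lambda>\<tau>. \<tau> + h)" by (intro continuous_intros)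
    moreover have "(\<lambda>\<tau>. \<tau> + h) ` {t..} \<subseteq> {0<..}" using t h by auto
    ultimately show ?thesis using cA continuous_on_compose2 by blast
  qed
  have cI: "continuous_on {t..} (\<lambda>\<tau>. integral {0..h} (\<lambda>v. gB (\<tau> + v)))"
    by (rule inner_cont) (use cB t h in \<open>auto intro: continuous_on_subset\<close>)
  have "negdiff h (Jint L gA) t = - (Jint L (\<lambda>\<tau>. gA (\<tau> + h)) t - Jint L gA t)"
    unfolding negdiff_def Jint_shift ..
  also have "\<dots> = Jint L (\<lambda>\<tau>. (-1) * gA (\<tau> + h) + 1 * gA \<tau>) t"
    using Jint_linear[OF cAh cA' L order_refl, of "-1" 1] by simp
  also have "\<dots> = Jint L (\<lambda>\<tau>. (- c) * integral {0..h} (\<lambda>v. gB (\<tau> + v)) + 0 * integral {0..h} (\<lambda>v. gB (\<tau> + v))) t"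
  proof (rule Jint_cong[OF _ L order_refl])
    fix \<tau> assume "\<tau> \<ge> t"
    then have "\<tau> > 0" using t by simp
    from ftc_shift[OF D cB this, of h] h
    show "(-1) * gA (\<tau> + h) + 1 * gA \<tau> = (- c) * integral {0..h} (\<lambda>v. gB (\<tau> + v)) + 0 * integral {0..h} (\<lambda>v. gB (\<tau> + v))"
      by (simp add: algebra_simps)
  qed
  also have "\<dots> = (- c) * Jint L (\<lambda>\<tau>. integral {0..h} (\<lambda>v. gB (\<tau> + v))) t + 0 * Jint L (\<lambda>\<tau>. integral {0..h} (\<lambda>v. gB (\<tau> + v))) t"
    by (rule Jint_linear[OF cI cI L order_refl])
  finally show ?thesis by simp
qed


lemma box_sides_Cons: "box_sides (h # hs) (i # ks) = replicate i h @ box_sides hs ks"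
  by (simp add: box_sides_def)

lemma box_sides_Nil: "box_sides [] [] = []"
  by (simp add: box_sides_def)

lemma length_box_sides: "length hs = length ks \<Longrightarrow> length (box_sides hs ks) = sum_list ks"
proof (induction hs ks rule: list_induct2)
  case Nil then show ?case by (simp add: box_sides_Nil)
next
  case (Cons h hs i ks) then show ?case by (simp add: box_sides_Cons)
qed

lemma set_box_sides: "length hs = length ks \<Longrightarrow> set (box_sides hs ks) \<subseteq> set hs"
proof (induction hs ks rule: list_induct2)
  case Nil then show ?case by (simp add: box_sides_Nil)
next
  case (Cons h hs i ks) then show ?case by (auto simp: box_sides_Cons)
qed

lemma negdiff_funpow_cong:
  assumes h: "h > 0" and eq: "\<And>t. t > 0 \<Longrightarrow> F1 t = F2 t"
  shows "t > 0 \<Longrightarrow> (negdiff h ^^ i) F1 t = (negdiff h ^^ i) F2 t"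
proof (induction i arbitrary: t)
  case 0 then show ?case using eq by simp
next
  case (Suc i)
  have "t + h > 0" using Suc.prems h by simp
  then show ?case using Suc by (simp add: negdiff_def)
qed

lemma negdiff_multi_formula:
  fixes G :: "nat \<Rightarrow> real \<Rightarrow> complex" and s :: complex
  assumes D: "\<And>m \<tau>. \<tau> > 0 \<Longrightarrow> (G m has_vector_derivative (- (s + of_nat m)) * G (Suc m) \<tau>) (at \<tau>)"
    and C: "\<And>m. continuous_on {0<..} (G m)"
    and len: "length hs = length ks" and pos: "\<forall>h\<in>set hs. h > 0"
  shows "\<forall>t>0. negdiff_multi hs ks (G 0) t = pochhammer s (sum_list ks) * Jint (box_sides hs ks) (G (sum_list ks)) t"
  using len pos
proof (induction hs ks rule: list_induct2)
  case Nil then show ?case by (simp add: box_sides_Nil)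
next
  case (Cons h hs i ks)
  define N where "N = sum_list ks"
  define B where "B = box_sides hs ks"
  have h: "h > 0" using Cons.prems by simp
  have IH: "\<forall>t>0. negdiff_multi hs ks (G 0) t = pochhammer s N * Jint B (G N) t"
    using Cons.IH Cons.prems unfolding N_def B_def by simp
  have Bpos: "\<forall>x\<in>set B. x \<ge> 0"
    using set_box_sides[OF Cons.hyps] Cons.prems unfolding B_def by force
  have claim: "\<forall>t>0. (negdiff h ^^ j) (negdiff_multi hs ks (G 0)) t
      = pochhammer s (N + j) * Jint (replicate j h @ B) (G (N + j)) t" for j
  proof (induction j)
    case 0 then show ?case using IH by simp
  next
    case (Suc j)
    show ?case
    proof (intro allI impI)
      fix t :: real assume t: "t > 0"
      define L where "L = replicate j h @ B"
      have Lpos: "\<forall>x\<in>set L. x \<ge> 0" using Bpos h unfolding L_def by auto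
      have "(negdiff h ^^ Suc j) (negdiff_multi hs ks (G 0)) t
          = negdiff h ((negdiff h ^^ j) (negdiff_multi hs ks (G 0))) t" by simp
      also have "\<dots> = negdiff h (\<lambda>\<tau>. pochhammer s (N + j) * Jint L (G (N + j)) \<tau>) t"
      proof -
        define X where "X = (negdiff h ^^ j) (negdiff_multi hs ks (G 0))"
        have X1: "X (t + h) = pochhammer s (N + j) * Jint L (G (N + j)) (t + h)"
          using Suc.IH t h unfolding L_def X_def by simp
        have X2: "X t = pochhammer s (N + j) * Jint L (G (N + j)) t"
          using Suc.IH t h unfolding L_def X_def by simp
        show ?thesis unfolding X_def[symmetric] negdiff_def X1 X2 ..
      qed
      also have "\<dots> = pochhammer s (N + j) * negdiff h (Jint L (G (N + j))) t"
        by (simp add: negdiff_def algebra_simps)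
      also have "negdiff h (Jint L (G (N + j))) t = (- (- (s + of_nat (N + j)))) * Jint (h # L) (G (Suc (N + j))) t"
        by (rule negdiff_step[OF D C C Lpos t h])
      also have "pochhammer s (N + j) * ((- (- (s + of_nat (N + j)))) * Jint (h # L) (G (Suc (N + j))) t)
          = pochhammer s (N + Suc j) * Jint (replicate (Suc j) h @ B) (G (N + Suc j)) t"
        by (simp add: L_def pochhammer_rec' algebra_simps)
      finally show "(negdiff h ^^ Suc j) (negdiff_multi hs ks (G 0)) t
          = pochhammer s (N + Suc j) * Jint (replicate (Suc j) h @ B) (G (N + Suc j)) t" .
    qed
  qed
  show ?case
    using claim[of i] by (simp add: box_sides_Cons N_def B_def add.commute)
qed

context Hs
begin

lemma fR_cont: "z \<in> Reg f \<Longrightarrow> continuous_on {0<..} (\<lambda>\<tau>. fR f z \<tau>)"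
proof -
  assume z: "z \<in> Reg f"
  have "\<forall>t\<in>{0<..}. isCont (\<lambda>\<tau>. fR f z \<tau>) t"
  proof
    fix t :: real assume "t \<in> {0<..}"
    then have "t > 0" by simp
    show "isCont (\<lambda>\<tau>. fR f z \<tau>) t" by (rule has_vector_derivative_continuous[OF fR_deriv[OF z \<open>t > 0\<close>]])
  qed
  then show ?thesis by (simp add: continuous_at_imp_continuous_on)
qed

lemma coeff_form:
  "of_nat n \<in> Reg f \<Longrightarrow> \<exists>a. \<forall>t>0. fR f (of_nat n) t = (\<Sum>k\<le>n. a k * complex_of_real t ^ k)"
proof (induction n)
  case 0
  have "((\<lambda>\<tau>. fR f 0 \<tau>) has_vector_derivative 0) (at t within {0<..})" if "t \<in> {0<..}" for t
    using fR_deriv[of 0 t] 0 that by (auto intro: has_vector_derivative_at_within)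
  then obtain c where c: "\<And>t. t \<in> {0<..} \<Longrightarrow> fR f 0 t = c"
    using has_vector_derivative_zero_constant[of "{0<..}" "\<lambda>\<tau>. fR f 0 \<tau>"] by auto
  show ?case by (rule exI[of _ "\<lambda>_. c"]) (use c in simp)
next
  case (Suc n)
  have Rn: "of_nat n \<in> Reg f" using reg_shift[OF Suc.prems] by simp
  obtain a where a: "\<And>t. t > 0 \<Longrightarrow> fR f (of_nat n) t = (\<Sum>k\<le>n. a k * complex_of_real t ^ k)"
    using Suc.IH[OF Rn] by blast
  define b where "b k = of_nat (Suc n) * a k / of_nat (Suc k)" for k
  define Q where "Q t = (\<Sum>k\<le>n. b k * complex_of_real t ^ Suc k)" for t
  have DQ: "(Q has_vector_derivative of_nat (Suc n) * (\<Sum>k\<le>n. a k * complex_of_real t ^ k)) (at t)" for t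
  proof -
    define q where "q x = (\<Sum>k\<le>n. b k * x ^ Suc k)" for x :: complex
    have "(q has_field_derivative (\<Sum>k\<le>n. b k * ((1 + of_nat k) * (1 * complex_of_real t ^ k)))) (at (complex_of_real t))"
      unfolding q_def by (intro DERIV_sum DERIV_cmult DERIV_power_Suc DERIV_ident)
    then have "(q has_field_derivative (\<Sum>k\<le>n. b k * (of_nat (Suc k) * complex_of_real t ^ k))) (at (complex_of_real t))"
      by simp
    moreover have "(\<Sum>k\<le>n. b k * (of_nat (Suc k) * complex_of_real t ^ k)) = of_nat (Suc n) * (\<Sum>k\<le>n. a k * complex_of_real t ^ k)"
      unfolding sum_distrib_left by (intro sum.cong refl) (simp add: b_def field_simps del: of_nat_Suc)
    ultimately have dq: "(q has_field_derivative of_nat (Suc n) * (\<Sum>k\<le>n. a k * complex_of_real t ^ k)) (at (complex_of_real t))"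
      by simp
    have dr: "(complex_of_real has_vector_derivative 1) (at t)"
      using has_vector_derivative_of_real[of "\<lambda>x. x" 1 "at t"] by (simp add: DERIV_ident)
    have "(q \<circ> complex_of_real has_vector_derivative 1 * (of_nat (Suc n) * (\<Sum>k\<le>n. a k * complex_of_real t ^ k))) (at t)"
      by (rule field_vector_diff_chain_at[OF dr dq])
    moreover have "q \<circ> complex_of_real = Q" by (simp add: fun_eq_iff q_def Q_def)
    ultimately show ?thesis by simp
  qed
  have "((\<lambda>\<tau>. fR f (of_nat (Suc n)) \<tau> - Q \<tau>) has_vector_derivative 0) (at t within {0<..})" if t: "t \<in> {0<..}" for t
  proof -
    have "((\<lambda>\<tau>. fR f (of_nat (Suc n)) \<tau>) has_vector_derivative of_nat (Suc n) * fR f (of_nat n) t) (at t)"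
      using fR_deriv[OF Suc.prems, of t] t by simp
    then have "((\<lambda>\<tau>. fR f (of_nat (Suc n)) \<tau> - Q \<tau>) has_vector_derivative
        of_nat (Suc n) * fR f (of_nat n) t - of_nat (Suc n) * (\<Sum>k\<le>n. a k * complex_of_real t ^ k)) (at t)"
      by (intro has_vector_derivative_diff DQ)
    moreover have "of_nat (Suc n) * fR f (of_nat n) t - of_nat (Suc n) * (\<Sum>k\<le>n. a k * complex_of_real t ^ k) = 0"
      using a t by simp
    ultimately show ?thesis by (auto intro: has_vector_derivative_at_within)
  qed
  then obtain c where c: "\<And>t. t \<in> {0<..} \<Longrightarrow> fR f (of_nat (Suc n)) t - Q t = c"
    using has_vector_derivative_zero_constant[of "{0<..}" "\<lambda>\<tau>. fR f (of_nat (Suc n)) \<tau> - Q \<tau>"] by auto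
  define a' where "a' k = (if k = 0 then c else b (k - 1))" for k
  show ?case
  proof (intro exI allI impI)
    fix t :: real assume t: "t > 0"
    have "(\<Sum>k\<le>Suc n. a' k * complex_of_real t ^ k) = c + Q t"
      unfolding sum.atMost_Suc_shift by (simp add: a'_def Q_def)
    also have "\<dots> = fR f (of_nat (Suc n)) t" using c[of t] t by (simp add: algebra_simps)
    finally show "fR f (of_nat (Suc n)) t = (\<Sum>k\<le>Suc n. a' k * complex_of_real t ^ k)" by simp
  qed
qed

lemma poly_part:
  assumes "of_nat n \<in> Reg f"
  shows "\<exists>p :: complex poly. degree p \<le> n \<and> (\<forall>t>0. fR f (of_nat n) t = poly p (of_real t))"
proof -
  obtain a where a: "\<And>t. t > 0 \<Longrightarrow> fR f (of_nat n) t = (\<Sum>k\<le>n. a k * complex_of_real t ^ k)"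
    using coeff_form[OF assms] by blast
  define p where "p = (\<Sum>k\<le>n. monom (a k) k)"
  have "degree p \<le> n" unfolding p_def
    by (rule degree_sum_le) (auto intro: order_trans[OF degree_monom_le])
  moreover have "poly p (of_real t) = (\<Sum>k\<le>n. a k * complex_of_real t ^ k)" for t
    unfolding p_def by (simp add: poly_sum poly_monom)
  ultimately show ?thesis using a by auto
qed

end


lemma psf_lborel: "product_sigma_finite (\<lambda>_::nat. lborel :: real measure)"
  by (rule product_sigma_finite.intro) (rule lborel.sigma_finite_measure_axioms)

lemma cont_UNIV_meas:
  fixes g :: "real \<Rightarrow> complex"
  assumes "continuous_on UNIV g" shows "g \<in> borel_measurable borel"
  using assms by (rule borel_measurable_continuous_onI)

lemma G'_cont:
  fixes g :: "real \<Rightarrow> complex"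
  assumes "continuous_on UNIV g"
  shows "continuous_on UNIV (\<lambda>\<tau>. integral {0..h} (\<lambda>v. g (\<tau> + v)))"
proof -
  have "continuous_on (UNIV \<times> cbox 0 h) (\<lambda>(\<tau>, v). g (\<tau> + v))"
  proof -
    have "continuous_on (UNIV \<times> cbox 0 h) (\<lambda>p. fst p + snd p)" by (intro continuous_intros)
    then have "continuous_on (UNIV \<times> cbox 0 h) (g \<circ> (\<lambda>p. fst p + snd p))"
      using assms by (intro continuous_on_compose) (auto intro: continuous_on_subset)
    then show ?thesis by (simp add: o_def case_prod_beta)
  qed
  then have "continuous_on UNIV (\<lambda>\<tau>. integral (cbox 0 h) (\<lambda>v. g (\<tau> + v)))"
    by (rule integral_continuous_on_param)
  then show ?thesis by (simp only: cbox_interval)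
qed

lemma PiE_upd_iff:
  assumes "a \<notin> I" "x \<in> extensional I"
  shows "x(a := y) \<in> PiE (insert a I) B \<longleftrightarrow> x \<in> PiE I B \<and> y \<in> B a"
  using assms by (auto simp: PiE_iff extensional_def)

lemma box_integrable:
  fixes g :: "real \<Rightarrow> complex" and B :: "nat \<Rightarrow> real"
  assumes cont: "continuous_on UNIV g" and fin: "finite J"
  shows "integrable (PiM J (\<lambda>_. lborel))
     (\<lambda>u. indicator (PiE J (\<lambda>k. {0..B k})) u *\<^sub>R g (t + (\<Sum>k\<in>J. u k)))"
proof -
  define A where "A = PiE J (\<lambda>k. {0..B k})"
  define S where "S = (\<Sum>k\<in>J. \<bar>B k\<bar>)"
  have "compact ((\<lambda>\<tau>. g \<tau>) ` {t - S..t + S})"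
    by (rule compact_continuous_image) (use cont in \<open>auto intro: continuous_on_subset\<close>)
  then have "bounded (g ` {t - S..t + S})" by (rule compact_imp_bounded)
  then obtain C where C: "\<forall>x\<in>g ` {t - S..t + S}. norm x \<le> C" unfolding bounded_iff by blast
  have Asets: "A \<in> sets (PiM J (\<lambda>_. lborel))" unfolding A_def by (rule sets_PiM_I_finite[OF fin]) auto
  have "emeasure (PiM J (\<lambda>_. lborel)) A = (\<Prod>i\<in>J. emeasure lborel {0..B i})"
    unfolding A_def by (rule product_sigma_finite.emeasure_PiM[OF psf_lborel fin]) auto
  also have "\<dots> < \<infinity>"
  proof -
    have "emeasure lborel {0..B i} \<noteq> top" for i by (cases "0 \<le> B i") auto
    then show ?thesis using fin by (simp add: ennreal_prod_eq_top less_top[symmetric])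
  qed
  finally have Afin: "emeasure (PiM J (\<lambda>_. lborel)) A < \<infinity>" .
  have iA: "integrable (PiM J (\<lambda>_. lborel)) (\<lambda>u. C * indicator A u)"
    by (intro integrable_mult_right integrable_real_indicator Asets Afin)
  show ?thesis unfolding A_def[symmetric]
  proof (rule Bochner_Integration.integrable_bound[OF iA])
    have "(\<lambda>u. t + (\<Sum>k\<in>J. u k)) \<in> borel_measurable (PiM J (\<lambda>_. lborel))"
      by (intro borel_measurable_add borel_measurable_sum borel_measurable_const) (auto intro: measurable_component_singleton)
    moreover have "g \<in> borel_measurable borel" by (rule cont_UNIV_meas[OF cont])
    ultimately have "(\<lambda>u. g (t + (\<Sum>k\<in>J. u k))) \<in> borel_measurable (PiM J (\<lambda>_. lborel))"
      by (rule measurable_compose)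
    moreover have "indicator A \<in> borel_measurable (PiM J (\<lambda>_. lborel))"
      using Asets by (rule borel_measurable_indicator)
    ultimately show "(\<lambda>u. indicator A u *\<^sub>R g (t + (\<Sum>k\<in>J. u k))) \<in> borel_measurable (PiM J (\<lambda>_. lborel))"
      by (intro borel_measurable_scaleR)
    show "AE u in PiM J (\<lambda>_. lborel). norm (indicator A u *\<^sub>R g (t + (\<Sum>k\<in>J. u k))) \<le> norm (C * indicator A u)"
    proof (rule AE_I2)
      fix u
      show "norm (indicator A u *\<^sub>R g (t + (\<Sum>k\<in>J. u k))) \<le> norm (C * indicator A u)"
      proof (cases "u \<in> A")
        case True
        then have uk: "\<And>k. k \<in> J \<Longrightarrow> 0 \<le> u k \<and> u k \<le> B k" unfolding A_def by (auto simp: PiE_iff)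
        have "\<bar>\<Sum>k\<in>J. u k\<bar> \<le> (\<Sum>k\<in>J. \<bar>u k\<bar>)" by (rule sum_abs)
        also have "\<dots> \<le> S" unfolding S_def using uk by (intro sum_mono) fastforce
        finally have "t + (\<Sum>k\<in>J. u k) \<in> {t - S..t + S}" by auto
        then have "norm (g (t + (\<Sum>k\<in>J. u k))) \<le> C" using C by blast
        moreover have "C \<ge> 0" using C \<open>t + (\<Sum>k\<in>J. u k) \<in> {t - S..t + S}\<close> norm_ge_zero order_trans by blast
        ultimately show ?thesis using True by simp
      qed simp
    qed
  qed
qed


lemma KI_Jint:
  fixes g :: "real \<Rightarrow> complex"
  assumes "continuous_on UNIV g" "\<forall>x\<in>set L. x \<ge> 0"
  shows "(LINT u : PiE {a..<a + length L} (\<lambda>k. {0 .. L ! (k - a)}) | PiM {a..<a + length L} (\<lambda>_. lborel).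
            g (t + (\<Sum>k\<in>{a..<a + length L}. u k))) = Jint L g t"
  using assms
proof (induction L arbitrary: a g t)
  case Nil
  show ?case by (simp add: set_lebesgue_integral_def PiM_empty lebesgue_integral_count_space_finite)
next
  case (Cons h L)
  define n where "n = length L"
  define I where "I = {Suc a..<Suc a + n}"
  define B where "B = (\<lambda>k. {0 .. (h # L) ! (k - a)})"
  define B' where "B' = (\<lambda>k. {0 .. L ! (k - Suc a)})"
  define G' where "G' \<tau> = integral {0..h} (\<lambda>v. g (\<tau> + v))" for \<tau>
  have ins: "{a..<a + length (h # L)} = insert a I" unfolding I_def n_def by auto
  have aI: "a \<notin> I" "finite I" unfolding I_def by auto
  have BB': "B k = B' k" if "k \<in> I" for k
  proof -
    have "k - a = Suc (k - Suc a)" using that unfolding I_def by auto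
    then show ?thesis unfolding B_def B'_def by simp
  qed
  have Ba: "B a = {0..h}" unfolding B_def by simp
  have PiEB: "PiE I B = PiE I B'" using BB' by (intro PiE_cong) auto
  have h0: "h \<ge> 0" using Cons.prems by simp
  define F where "F u = indicator (PiE (insert a I) B) u *\<^sub>R g (t + (\<Sum>k\<in>insert a I. u k))" for u
  have Fint: "integrable (PiM (insert a I) (\<lambda>_. lborel)) F"
    unfolding F_def B_def by (rule box_integrable[OF Cons.prems(1)]) (use aI in simp)
  have "(LINT u : PiE {a..<a + length (h # L)} (\<lambda>k. {0 .. (h # L) ! (k - a)}) | PiM {a..<a + length (h # L)} (\<lambda>_. lborel).
            g (t + (\<Sum>k\<in>{a..<a + length (h # L)}. u k))) = integral\<^sup>L (PiM (insert a I) (\<lambda>_. lborel)) F"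
    unfolding set_lebesgue_integral_def ins F_def B_def ..
  also have "\<dots> = (LINT x|PiM I (\<lambda>_. lborel). LINT y|lborel. F (x(a := y)))"
    by (rule product_sigma_finite.product_integral_insert[OF psf_lborel aI(2) aI(1) Fint])
  also have "\<dots> = (LINT x|PiM I (\<lambda>_. lborel). indicator (PiE I B') x *\<^sub>R G' (t + (\<Sum>k\<in>I. x k)))"
  proof (rule Bochner_Integration.integral_cong[OF refl])
    fix x :: "nat \<Rightarrow> real" assume x: "x \<in> space (PiM I (\<lambda>_. lborel))"
    then have xe: "x \<in> extensional I" by (simp add: space_PiM PiE_iff)
    define \<tau> where "\<tau> = t + (\<Sum>k\<in>I. x k)"
    have Fy: "F (x(a := y)) = indicator (PiE I B) x *\<^sub>R (indicator {0..h} y *\<^sub>R g (\<tau> + y))" for y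
    proof -
      have "(\<Sum>k\<in>insert a I. (x(a := y)) k) = y + (\<Sum>k\<in>I. x k)"
        using aI by (simp add: sum.insert) (intro sum.cong refl, auto)
      moreover have "indicator (PiE (insert a I) B) (x(a := y)) = (indicator (PiE I B) x * indicator {0..h} y :: real)"
        using PiE_upd_iff[OF aI(1) xe, of y B] Ba by (simp add: indicator_def)
      ultimately show ?thesis unfolding F_def \<tau>_def by (simp add: algebra_simps)
    qed
    have ci: "continuous_on {0..h} (\<lambda>y. g (\<tau> + y))"
      by (rule continuous_on_compose2[OF Cons.prems(1)]) (auto intro: continuous_intros)
    have si: "set_integrable lborel {0..h} (\<lambda>y. g (\<tau> + y))"
      unfolding set_integrable_def by (rule borel_integrable_compact[OF compact_Icc ci])
    have "(LINT y|lborel. F (x(a := y))) = indicator (PiE I B) x *\<^sub>R (LINT y|lborel. indicator {0..h} y *\<^sub>R g (\<tau> + y))"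
      unfolding Fy by (rule integral_scaleR_right)
    also have "(LINT y|lborel. indicator {0..h} y *\<^sub>R g (\<tau> + y)) = G' \<tau>"
      using set_borel_integral_eq_integral(2)[OF si] unfolding G'_def set_lebesgue_integral_def by simp
    finally show "(LINT y|lborel. F (x(a := y))) = indicator (PiE I B') x *\<^sub>R G' (t + (\<Sum>k\<in>I. x k))"
      unfolding PiEB \<tau>_def .
  qed
  also have "\<dots> = (LINT x : PiE {Suc a..<Suc a + length L} (\<lambda>k. {0 .. L ! (k - Suc a)}) | PiM {Suc a..<Suc a + length L} (\<lambda>_. lborel).
            G' (t + (\<Sum>k\<in>{Suc a..<Suc a + length L}. x k)))"
    unfolding set_lebesgue_integral_def I_def n_def B'_def ..
  also have "\<dots> = Jint L G' t"
  proof (rule Cons.IH)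
    show "continuous_on UNIV G'" unfolding G'_def by (rule G'_cont[OF Cons.prems(1)])
    show "\<forall>x\<in>set L. x \<ge> 0" using Cons.prems by simp
  qed
  also have "\<dots> = Jint (h # L) g t" by (simp add: G'_def[abs_def])
  finally show ?case .
qed


context Hs
begin

lemma main_part:
  assumes sR: "- s \<in> Reg f" and len: "length hs = length ks" and pos: "\<forall>h\<in>set hs. h > 0"
  shows "- s - of_nat (sum_list ks) \<in> Reg f
    \<and> (\<forall>t>0. negdiff_multi hs ks (\<lambda>\<tau>. fR f (- s) \<tau>) t
          = pochhammer s (sum_list ks) *
            (LINT u : PiE {..<sum_list ks} (\<lambda>k. {0 .. box_sides hs ks ! k})
               | PiM {..<sum_list ks} (\<lambda>_. lborel).
               fR f (- s - of_nat (sum_list ks)) (t + (\<Sum>k<sum_list ks. u k))))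
    \<and> (\<forall>n::nat. of_nat n \<in> Reg f \<longrightarrow>
         (\<exists>p :: complex poly. degree p \<le> n \<and> (\<forall>t>0. fR f (of_nat n) t = poly p (of_real t))))"
proof (intro conjI)
  define G where "G m t = fR f (- s - of_nat m) t" for m t
  have RegG: "- s - of_nat m \<in> Reg f" for m
  proof (induction m)
    case 0 then show ?case using sR by simp
  next
    case (Suc m)
    from reg_shift[OF Suc] show ?case by (simp add: algebra_simps)
  qed
  then show "- s - of_nat (sum_list ks) \<in> Reg f" .
  have D: "(G m has_vector_derivative (- (s + of_nat m)) * G (Suc m) \<tau>) (at \<tau>)" if "\<tau> > 0" for m \<tau>
  proof -
    have "((\<lambda>\<tau>. fR f (- s - of_nat m) \<tau>) has_vector_derivative (- s - of_nat m) * fR f (- s - of_nat m - 1) \<tau>) (at \<tau>)"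
      by (rule fR_deriv[OF RegG that])
    moreover have "- s - of_nat m - 1 = - s - of_nat (Suc m)" by simp
    ultimately show ?thesis unfolding G_def[abs_def] by (simp add: algebra_simps)
  qed
  have C: "continuous_on {0<..} (G m)" for m
    unfolding G_def[abs_def] by (rule fR_cont[OF RegG])
  have F: "\<forall>t>0. negdiff_multi hs ks (G 0) t = pochhammer s (sum_list ks) * Jint (box_sides hs ks) (G (sum_list ks)) t"
    by (rule negdiff_multi_formula[OF D C len pos])
  have G0: "G 0 = (\<lambda>\<tau>. fR f (- s) \<tau>)" by (simp add: G_def[abs_def])
  show "\<forall>t>0. negdiff_multi hs ks (\<lambda>\<tau>. fR f (- s) \<tau>) t
          = pochhammer s (sum_list ks) *
            (LINT u : PiE {..<sum_list ks} (\<lambda>k. {0 .. box_sides hs ks ! k})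
               | PiM {..<sum_list ks} (\<lambda>_. lborel).
               fR f (- s - of_nat (sum_list ks)) (t + (\<Sum>k<sum_list ks. u k)))"
  proof (intro allI impI)
    fix t :: real assume t: "t > 0"
    define N where "N = sum_list ks"
    define Bx where "Bx = box_sides hs ks"
    have lB: "length Bx = N" unfolding Bx_def N_def by (rule length_box_sides[OF len])
    have Bpos: "\<forall>x\<in>set Bx. x \<ge> 0"
      using set_box_sides[OF len] pos unfolding Bx_def by force
    define g' where "g' \<tau> = G N (max \<tau> t)" for \<tau>
    have g'c: "continuous_on UNIV g'"
    proof -
      have "continuous_on UNIV (\<lambda>\<tau>. max \<tau> t)" by (intro continuous_intros)
      moreover have "(\<lambda>\<tau>. max \<tau> t) ` UNIV \<subseteq> {0<..}" using t by auto
      ultimately show ?thesis unfolding g'_def using C continuous_on_compose2 by blast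
    qed
    have "Jint Bx (G N) t = Jint Bx g' t"
      by (rule Jint_cong[of t]) (use Bpos in \<open>auto simp: g'_def\<close>)
    also have "\<dots> = (LINT u : PiE {0..<0 + length Bx} (\<lambda>k. {0 .. Bx ! (k - 0)}) | PiM {0..<0 + length Bx} (\<lambda>_. lborel).
            g' (t + (\<Sum>k\<in>{0..<0 + length Bx}. u k)))"
      by (rule KI_Jint[symmetric, OF g'c Bpos])
    also have "\<dots> = (LINT u : PiE {..<N} (\<lambda>k. {0 .. Bx ! k}) | PiM {..<N} (\<lambda>_. lborel).
            g' (t + (\<Sum>k<N. u k)))"
      unfolding lB by (simp add: atLeast0LessThan)
    also have "\<dots> = (LINT u : PiE {..<N} (\<lambda>k. {0 .. Bx ! k}) | PiM {..<N} (\<lambda>_. lborel).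
            G N (t + (\<Sum>k<N. u k)))"
    proof (rule set_lebesgue_integral_cong)
      show "PiE {..<N} (\<lambda>k. {0 .. Bx ! k}) \<in> sets (PiM {..<N} (\<lambda>_. lborel))"
        by (rule sets_PiM_I_finite) auto
      show "\<forall>u. u \<in> PiE {..<N} (\<lambda>k. {0 .. Bx ! k}) \<longrightarrow> g' (t + (\<Sum>k<N. u k)) = G N (t + (\<Sum>k<N. u k))"
      proof (intro allI impI)
        fix u :: "nat \<Rightarrow> real" assume "u \<in> PiE {..<N} (\<lambda>k. {0 .. Bx ! k})"
        then have "(\<Sum>k<N. u k) \<ge> 0" by (intro sum_nonneg) (auto simp: PiE_iff)
        then show "g' (t + (\<Sum>k<N. u k)) = G N (t + (\<Sum>k<N. u k))" by (simp add: g'_def)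
      qed
    qed
    finally have J: "Jint Bx (G N) t = (LINT u : PiE {..<N} (\<lambda>k. {0 .. Bx ! k}) | PiM {..<N} (\<lambda>_. lborel).
            G N (t + (\<Sum>k<N. u k)))" .
    show "negdiff_multi hs ks (\<lambda>\<tau>. fR f (- s) \<tau>) t
          = pochhammer s (sum_list ks) *
            (LINT u : PiE {..<sum_list ks} (\<lambda>k. {0 .. box_sides hs ks ! k})
               | PiM {..<sum_list ks} (\<lambda>_. lborel).
               fR f (- s - of_nat (sum_list ks)) (t + (\<Sum>k<sum_list ks. u k)))"
      using F[rule_format, OF t] J unfolding G0 N_def Bx_def by (simp add: G_def)
  qed
  show "\<forall>n::nat. of_nat n \<in> Reg f \<longrightarrow>
         (\<exists>p :: complex poly. degree p \<le> n \<and> (\<forall>t>0. fR f (of_nat n) t = poly p (of_real t)))"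
    using poly_part by blast
qed

end

theorem mainTheorem11:
  fixes S :: "complex set" and f :: "complex \<Rightarrow> real \<Rightarrow> complex"
    and s :: complex and hs :: "real list" and ks :: "nat list"
  assumes "inH S f"
    and "- s \<in> Reg f"
    and "length hs = length ks"
    and "\<forall>h\<in>set hs. h > 0"
  shows "- s - of_nat (sum_list ks) \<in> Reg f
    \<and> (\<forall>t>0. negdiff_multi hs ks (\<lambda>\<tau>. fR f (- s) \<tau>) t
          = pochhammer s (sum_list ks) *
            (LINT u : PiE {..<sum_list ks} (\<lambda>k. {0 .. box_sides hs ks ! k})
               | PiM {..<sum_list ks} (\<lambda>_. lborel).
               fR f (- s - of_nat (sum_list ks)) (t + (\<Sum>k<sum_list ks. u k))))
    \<and> (\<forall>n::nat. of_nat n \<in> Reg f \<longrightarrow>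
         (\<exists>p :: complex poly. degree p \<le> n \<and> (\<forall>t>0. fR f (of_nat n) t = poly p (of_real t))))"
proof -
  from assms(1) obtain \<phi> where
      cS: "closed S" and dS: "discrete_set S"
      and hol: "\<forall>t>0. (\<lambda>z. f z t) holomorphic_on (- S)"
      and RP: "Reg f \<subseteq> Reg (pdt f)"
      and DLi: "DLi \<phi>"
      and L: "\<forall>s. Re s \<ge> 1 \<longrightarrow> - s \<notin> S \<and> (\<forall>t>0. f (- s) t =
                 Laplace (\<lambda>u. \<phi> u * (complex_of_real u) powr (s - 1) / Gamma s) t)"
    unfolding inH_def by blast
  interpret Hs S f \<phi>
  proof
    show "closed S" by (rule cS)
    show "discrete_set S" by (rule dS)
    show "\<And>t. t > 0 \<Longrightarrow> (\<lambda>z. f z t) holomorphic_on (- S)" using hol by blast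
    show "Reg f \<subseteq> Reg (pdt f)" by (rule RP)
    show "DL \<phi>" using DLi unfolding DLi_def by blast
    show "\<And>s. Re s \<ge> 1 \<Longrightarrow> - s \<notin> S" using L by blast
    show "\<And>s t. Re s \<ge> 1 \<Longrightarrow> t > 0 \<Longrightarrow>
        f (- s) t = Laplace (\<lambda>u. \<phi> u * of_real u powr (s - 1) / Gamma s) t" using L by blast
  qed
  show ?thesis by (rule main_part[OF assms(2-4)])
qed


end
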